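(* Let $X$ be a finite connected poset, $\theta\in\mathcal{AM}(X)$ and $\mathfrak{C}\in\mathcal{C}(X)/{\sim}$. Then there exists a poset isomorphism or anti-isomorphism $\lambda:\mathrm{supp}(\mathfrak{C})\to\mathrm{supp}(\widetilde\theta(\mathfrak{C}))$ such that for all $x<y$ in $\mathrm{supp}(\mathfrak{C})$ one has $\theta(e_{xy})=e_{\lambda(x)\lambda(y)}$ if $\lambda$ is an isomorphism, and $\theta(e_{xy})=e_{\lambda(y)\lambda(x)}$ if $\lambda$ is an anti-isomorphism.
   Context: For $x<y$ in $X$, $e_{xy}$ denotes the corresponding basis element of the incidence algebra (the indicator of $(x,y)$); $B=\{e_{xy}:x<y\}$. $\mathcal{C}(X)$ is the set of maximal chains. For a bijection $\theta:B\to B$ and $C:u_1<\dots<u_m$ in $\mathcal{C}(X)$, $\theta$ is increasing on $C$ if there is $D:v_1<\dots<v_m$ in $\mathcal{C}(X)$ with $\theta(e_{u_iu_j})=e_{v_iv_j}$ for all $i<j$, and decreasing on $C$ if there is such $D$ with $\theta(e_{u_iu_j})=e_{v_{m-j+1}v_{m-i+1}}$ for all $i<j$; in both cases write $\theta(C)=D$. $\mathcal{M}(X)$ is the set of bijections $B\to B$ increasing or decreasing on every maximal chain. A walk is a sequence $u_0,\dots,u_m$ in which for each $i$ one of $u_i,u_{i+1}$ covers the other; closed if $u_0=u_m$. For a closed walk $\Gamma:u_0,\dots,u_m=u_0$ and $z\in X$: $s^+_{\theta,\Gamma}(z)=|\{i: u_i<u_{i+1},\ \exists w>z,\ \theta(e_{zw})=e_{u_iu_{i+1}}\}|$,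 $s^-_{\theta,\Gamma}(z)=|\{i: u_i>u_{i+1},\ \exists w>z,\ \theta(e_{zw})=e_{u_{i+1}u_i}\}|$, $t^+_{\theta,\Gamma}(z)=|\{i: u_i<u_{i+1},\ \exists w<z,\ \theta(e_{wz})=e_{u_iu_{i+1}}\}|$, $t^-_{\theta,\Gamma}(z)=|\{i: u_i>u_{i+1},\ \exists w<z,\ \theta(e_{wz})=e_{u_{i+1}u_i}\}|$ (with $0\le i\le m-1$). $\theta$ is admissible if $s^+-s^-=t^+-t^-$ at every $z$ for every closed walk $\Gamma$; $\mathcal{AM}(X)$ is the set of admissible elements of $\mathcal{M}(X)$. Two maximal chains are linked if they share an element lying in neither $\mathrm{Min}(X)$ nor $\mathrm{Max}(X)$; $\sim$ is the equivalence relation on $\mathcal{C}(X)$ generated by linkedness. The support of a class $\mathfrak{C}$ is $\mathrm{supp}(\mathfrak{C})=\bigcup_{C\in\mathfrak{C}}C$, with the induced order. For $\theta\in\mathcal{M}(X)$, $\widetilde\theta(\mathfrak{C})$ denotes the $\sim$-class of $\theta(C)$ for $C\in\mathfrak{C}$ (this does not depend on the choice of $C$). *)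

theory Defs
  imports Main
begin

text \<open>The poset is a finite carrier set X inside a type of class order, with the
induced order. The basis element e_xy of the incidence algebra is represented by
the pair (x,y); B is the set of pairs x<y in X.\<close>

definition basis :: "'a::order set \<Rightarrow> ('a \<times> 'a) set" where
  "basis X = {(x, y). x \<in> X \<and> y \<in> X \<and> x < y}"

definition is_chain :: "'a::order set \<Rightarrow> bool" where
  "is_chain C \<longleftrightarrow> (\<forall>x\<in>C. \<forall>y\<in>C. x \<le> y \<or> y \<le> x)"

definition max_chains :: "'a::order set \<Rightarrow> 'a set set" where
  "max_chains X = {C. C \<subseteq> X \<and> is_chain C \<and>
      \<not> (\<exists>C'. C' \<subseteq> X \<and> is_chain C' \<and> C \<subset> C')}"

definition connected_poset :: "'a::order set \<Rightarrow> bool" where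
  "connected_poset X \<longleftrightarrow> (\<forall>x\<in>X. \<forall>y\<in>X.
      (\<lambda>a b. a \<in> X \<and> b \<in> X \<and> (a \<le> b \<or> b \<le> a))\<^sup>*\<^sup>* x y)"

definition minimal_elems :: "'a::order set \<Rightarrow> 'a set" where
  "minimal_elems X = {x \<in> X. \<not> (\<exists>y\<in>X. y < x)}"

definition maximal_elems :: "'a::order set \<Rightarrow> 'a set" where
  "maximal_elems X = {x \<in> X. \<not> (\<exists>y\<in>X. x < y)}"

text \<open>theta increasing on C with theta(C) = D: the map u_i \<mapsto> v_i is an order
isomorphism f : C \<rightarrow> D with theta(e_{xy}) = e_{f x, f y}.\<close>
definition incr_to :: "'a::order set \<Rightarrow> ('a \<times> 'a \<Rightarrow> 'a \<times> 'a) \<Rightarrow> 'a set \<Rightarrow> 'a set \<Rightarrow> bool" where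
  "incr_to X \<theta> C D \<longleftrightarrow> D \<in> max_chains X \<and> (\<exists>f. bij_betw f C D \<and>
      (\<forall>x\<in>C. \<forall>y\<in>C. x < y \<longrightarrow> f x < f y) \<and>
      (\<forall>x\<in>C. \<forall>y\<in>C. x < y \<longrightarrow> \<theta> (x, y) = (f x, f y)))"

text \<open>theta decreasing on C with theta(C) = D: the map u_i \<mapsto> v_{m-i+1} is an
order anti-isomorphism f : C \<rightarrow> D with theta(e_{xy}) = e_{f y, f x}.\<close>
definition decr_to :: "'a::order set \<Rightarrow> ('a \<times> 'a \<Rightarrow> 'a \<times> 'a) \<Rightarrow> 'a set \<Rightarrow> 'a set \<Rightarrow> bool" where
  "decr_to X \<theta> C D \<longleftrightarrow> D \<in> max_chains X \<and> (\<exists>f. bij_betw f C D \<and>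
      (\<forall>x\<in>C. \<forall>y\<in>C. x < y \<longrightarrow> f y < f x) \<and>
      (\<forall>x\<in>C. \<forall>y\<in>C. x < y \<longrightarrow> \<theta> (x, y) = (f y, f x)))"

definition chain_image :: "'a::order set \<Rightarrow> ('a \<times> 'a \<Rightarrow> 'a \<times> 'a) \<Rightarrow> 'a set \<Rightarrow> 'a set \<Rightarrow> bool" where
  "chain_image X \<theta> C D \<longleftrightarrow> incr_to X \<theta> C D \<or> decr_to X \<theta> C D"

definition M_set :: "'a::order set \<Rightarrow> ('a \<times> 'a \<Rightarrow> 'a \<times> 'a) set" where
  "M_set X = {\<theta>. bij_betw \<theta> (basis X) (basis X) \<and>
      (\<forall>C\<in>max_chains X. (\<exists>D. incr_to X \<theta> C D) \<or> (\<exists>D. decr_to X \<theta> C D))}"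

definition covers :: "'a::order set \<Rightarrow> 'a \<Rightarrow> 'a \<Rightarrow> bool" where
  "covers X x y \<longleftrightarrow> x \<in> X \<and> y \<in> X \<and> x < y \<and> \<not> (\<exists>z\<in>X. x < z \<and> z < y)"

definition closed_walk :: "'a::order set \<Rightarrow> nat \<Rightarrow> (nat \<Rightarrow> 'a) \<Rightarrow> bool" where
  "closed_walk X m u \<longleftrightarrow> (\<forall>i\<le>m. u i \<in> X) \<and>
      (\<forall>i<m. covers X (u i) (u (Suc i)) \<or> covers X (u (Suc i)) (u i)) \<and> u m = u 0"

definition s_plus :: "'a::order set \<Rightarrow> ('a \<times> 'a \<Rightarrow> 'a \<times> 'a) \<Rightarrow> nat \<Rightarrow> (nat \<Rightarrow> 'a) \<Rightarrow> 'a \<Rightarrow> nat" where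
  "s_plus X \<theta> m u z = card {i. i < m \<and> u i < u (Suc i) \<and>
      (\<exists>w\<in>X. z < w \<and> \<theta> (z, w) = (u i, u (Suc i)))}"

definition s_minus :: "'a::order set \<Rightarrow> ('a \<times> 'a \<Rightarrow> 'a \<times> 'a) \<Rightarrow> nat \<Rightarrow> (nat \<Rightarrow> 'a) \<Rightarrow> 'a \<Rightarrow> nat" where
  "s_minus X \<theta> m u z = card {i. i < m \<and> u (Suc i) < u i \<and>
      (\<exists>w\<in>X. z < w \<and> \<theta> (z, w) = (u (Suc i), u i))}"

definition t_plus :: "'a::order set \<Rightarrow> ('a \<times> 'a \<Rightarrow> 'a \<times> 'a) \<Rightarrow> nat \<Rightarrow> (nat \<Rightarrow> 'a) \<Rightarrow> 'a \<Rightarrow> nat" where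
  "t_plus X \<theta> m u z = card {i. i < m \<and> u i < u (Suc i) \<and>
      (\<exists>w\<in>X. w < z \<and> \<theta> (w, z) = (u i, u (Suc i)))}"

definition t_minus :: "'a::order set \<Rightarrow> ('a \<times> 'a \<Rightarrow> 'a \<times> 'a) \<Rightarrow> nat \<Rightarrow> (nat \<Rightarrow> 'a) \<Rightarrow> 'a \<Rightarrow> nat" where
  "t_minus X \<theta> m u z = card {i. i < m \<and> u (Suc i) < u i \<and>
      (\<exists>w\<in>X. w < z \<and> \<theta> (w, z) = (u (Suc i), u i))}"

definition admissible :: "'a::order set \<Rightarrow> ('a \<times> 'a \<Rightarrow> 'a \<times> 'a) \<Rightarrow> bool" where
  "admissible X \<theta> \<longleftrightarrow> (\<forall>m u. closed_walk X m u \<longrightarrow> (\<forall>z\<in>X.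
      int (s_plus X \<theta> m u z) - int (s_minus X \<theta> m u z) =
      int (t_plus X \<theta> m u z) - int (t_minus X \<theta> m u z)))"

definition AM_set :: "'a::order set \<Rightarrow> ('a \<times> 'a \<Rightarrow> 'a \<times> 'a) set" where
  "AM_set X = {\<theta> \<in> M_set X. admissible X \<theta>}"

definition linked_rel :: "'a::order set \<Rightarrow> ('a set \<times> 'a set) set" where
  "linked_rel X = {(C, D). C \<in> max_chains X \<and> D \<in> max_chains X \<and>
      (\<exists>x\<in>C \<inter> D. x \<notin> minimal_elems X \<and> x \<notin> maximal_elems X)}"

definition sim_rel :: "'a::order set \<Rightarrow> ('a set \<times> 'a set) set" where
  "sim_rel X = Id_on (max_chains X) \<union> (linked_rel X)\<^sup>+"

definition supp :: "'a set set \<Rightarrow> 'a set" where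
  "supp \<CC> = \<Union> \<CC>"

end

theory Submission
  imports Defs
begin


lemma maxch_sub: "K \<in> max_chains X \<Longrightarrow> K \<subseteq> X"
  by (simp add: max_chains_def)

lemma maxch_chain: "K \<in> max_chains X \<Longrightarrow> is_chain K"
  by (simp add: max_chains_def)

lemma maxch_add:
  assumes "K \<in> max_chains X" "z \<in> X" "\<forall>k\<in>K. k \<le> z \<or> z \<le> k"
  shows "z \<in> K"
proof (rule ccontr)
  assume "z \<notin> K"
  have "is_chain (insert z K)" using assms maxch_chain[OF assms(1)]
    unfolding is_chain_def by auto
  moreover have "insert z K \<subseteq> X" using assms maxch_sub by auto
  moreover have "K \<subset> insert z K" using \<open>z \<notin> K\<close> by auto
  ultimately show False using assms(1) unfolding max_chains_def by blast
qed

lemma chain_ext: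
  assumes "finite X" "S \<subseteq> X" "is_chain S"
  shows "\<exists>K\<in>max_chains X. S \<subseteq> K"
proof -
  let ?Ch = "{T. S \<subseteq> T \<and> T \<subseteq> X \<and> is_chain T}"
  have ne: "S \<in> ?Ch" using assms by auto
  have bnd: "\<forall>T. T \<in> ?Ch \<longrightarrow> card T < Suc (card X)"
    using assms(1) by (auto simp: le_imp_less_Suc card_mono)
  obtain T where T: "T \<in> ?Ch" "\<And>T'. T' \<in> ?Ch \<Longrightarrow> card T' \<le> card T"
    using ex_has_greatest_nat[of "\<lambda>T. T \<in> ?Ch" S card "Suc (card X)", OF ne bnd] by blast
  have "T \<in> max_chains X"
  proof -
    { fix C' assume C': "C' \<subseteq> X" "is_chain C'" "T \<subset> C'"
      then have "C' \<in> ?Ch" using T by auto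
      then have "card C' \<le> card T" using T by blast
      moreover have "finite C'" using C' assms(1) finite_subset by blast
      then have "card T < card C'" using C' by (simp add: psubset_card_mono)
      ultimately have False by simp }
    then show ?thesis using T unfolding max_chains_def by blast
  qed
  then show ?thesis using T by blast
qed
lemma maxch_below:
  assumes "K \<in> max_chains X" "x \<in> K" "x \<notin> minimal_elems X"
  shows "\<exists>a\<in>K. a < x"
proof (rule ccontr)
  assume nb: "\<not> (\<exists>a\<in>K. a < x)"
  have "x \<in> X" using assms maxch_sub by auto
  then obtain y where y: "y \<in> X" "y < x" using assms(3) unfolding minimal_elems_def by auto
  have "\<forall>k\<in>K. k \<le> y \<or> y \<le> k"
  proof
    fix k assume "k \<in> K"
    then have "k \<le> x \<or> x \<le> k" using maxch_chain[OF assms(1)] assms(2) unfolding is_chain_def by auto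
    then show "k \<le> y \<or> y \<le> k"
    proof
      assume "k \<le> x" then have "k = x" using nb \<open>k\<in>K\<close> by (auto simp: order.order_iff_strict)
      then show ?thesis using y by auto
    next
      assume "x \<le> k" then show ?thesis using y by auto
    qed
  qed
  then have "y \<in> K" using maxch_add assms(1) y by blast
  then show False using nb y by auto
qed

lemma maxch_above:
  assumes "K \<in> max_chains X" "x \<in> K" "x \<notin> maximal_elems X"
  shows "\<exists>b\<in>K. x < b"
proof (rule ccontr)
  assume nb: "\<not> (\<exists>b\<in>K. x < b)"
  have "x \<in> X" using assms maxch_sub by auto
  then obtain y where y: "y \<in> X" "x < y" using assms(3) unfolding maximal_elems_def by auto
  have "\<forall>k\<in>K. k \<le> y \<or> y \<le> k"
  proof
    fix k assume "k \<in> K"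
    then have "k \<le> x \<or> x \<le> k" using maxch_chain[OF assms(1)] assms(2) unfolding is_chain_def by auto
    then show "k \<le> y \<or> y \<le> k"
    proof
      assume "x \<le> k" then have "k = x" using nb \<open>k\<in>K\<close> by (auto simp: order.order_iff_strict)
      then show ?thesis using y by auto
    next
      assume "k \<le> x" then show ?thesis using y by auto
    qed
  qed
  then have "y \<in> K" using maxch_add assms(1) y by blast
  then show False using nb y by auto
qed

lemma maxch_cover:
  assumes "K \<in> max_chains X" "a \<in> K" "b \<in> K" "a < b" "\<not> (\<exists>k\<in>K. a < k \<and> k < b)"
  shows "covers X a b"
proof -
  have ab: "a \<in> X" "b \<in> X" using assms maxch_sub by auto
  { fix z assume z: "z \<in> X" "a < z" "z < b"
    have "\<forall>k\<in>K. k \<le> z \<or> z \<le> k"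
    proof
      fix k assume k: "k \<in> K"
      have "k \<le> a \<or> a \<le> k" "k \<le> b \<or> b \<le> k" using maxch_chain[OF assms(1)] assms k unfolding is_chain_def by auto
      then show "k \<le> z \<or> z \<le> k"
      proof -
        { assume "k \<le> a" then have ?thesis using z by auto }
        moreover
        { assume "b \<le> k" then have ?thesis using z by auto }
        moreover
        { assume "a \<le> k" "k \<le> b"
          then have "k = a \<or> k = b" using assms(5) k by (auto simp: order.order_iff_strict)
          then have ?thesis using z by auto }
        ultimately show ?thesis using \<open>k \<le> a \<or> a \<le> k\<close> \<open>k \<le> b \<or> b \<le> k\<close> by blast
      qed
    qed
    then have "z \<in> K" using maxch_add assms(1) z by blast
    then have False using assms(5) z by auto }
  then show ?thesis using ab assms(4) unfolding covers_def by auto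
qed

definition goodg :: "'a::order set \<Rightarrow> ('a \<times> 'a \<Rightarrow> 'a \<times> 'a) \<Rightarrow> bool \<Rightarrow> 'a set \<Rightarrow> 'a set \<Rightarrow> ('a \<Rightarrow> 'a) \<Rightarrow> bool" where
  "goodg X \<psi> s K D f \<longleftrightarrow> D \<in> max_chains X \<and> bij_betw f K D \<and>
     (\<forall>x\<in>K. \<forall>y\<in>K. x < y \<longrightarrow> \<psi> (x, y) = (if s then (f x, f y) else (f y, f x)))"

locale mctx =
  fixes X :: "'a::order set" and \<psi> :: "'a \<times> 'a \<Rightarrow> 'a \<times> 'a"
  assumes fin: "finite X" and inj: "inj_on \<psi> (basis X)" and into: "\<psi> ` basis X \<subseteq> basis X"
    and ch: "\<forall>E\<in>max_chains X. \<exists>s F g. goodg X \<psi> s E F g"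
begin

lemma psi_basis: "p \<in> X \<Longrightarrow> q \<in> X \<Longrightarrow> p < q \<Longrightarrow> fst (\<psi> (p,q)) < snd (\<psi> (p,q)) \<and> fst (\<psi> (p,q)) \<in> X \<and> snd (\<psi> (p,q)) \<in> X"
proof -
  assume "p \<in> X" "q \<in> X" "p < q"
  then have "(p,q) \<in> basis X" by (simp add: basis_def)
  then have "\<psi> (p,q) \<in> basis X" using into by auto
  then show ?thesis by (auto simp: basis_def split: prod.splits)
qed

lemma psi_inj: "p \<in> X \<Longrightarrow> q \<in> X \<Longrightarrow> p < q \<Longrightarrow> p' \<in> X \<Longrightarrow> q' \<in> X \<Longrightarrow> p' < q' \<Longrightarrow>
   \<psi> (p,q) = \<psi> (p',q') \<Longrightarrow> p = p' \<and> q = q'"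
  using inj unfolding inj_on_def basis_def by blast

definition tI :: "'a \<Rightarrow> 'a \<Rightarrow> 'a \<Rightarrow> bool" where
  "tI x p q \<longleftrightarrow> snd (\<psi> (p,x)) = fst (\<psi> (x,q))"
definition tD :: "'a \<Rightarrow> 'a \<Rightarrow> 'a \<Rightarrow> bool" where
  "tD x p q \<longleftrightarrow> snd (\<psi> (x,q)) = fst (\<psi> (p,x))"

lemma triple_good:
  assumes "K \<in> max_chains X" "goodg X \<psi> s K D f" "p \<in> K" "x \<in> K" "q \<in> K" "p < x" "x < q"
  shows "(s \<longrightarrow> tI x p q) \<and> (\<not> s \<longrightarrow> tD x p q)"
  using assms unfolding goodg_def tI_def tD_def by auto

lemma triple_exists:
  assumes "p \<in> X" "x \<in> X" "q \<in> X" "p < x" "x < q"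
  shows "tI x p q \<or> tD x p q"
proof -
  have "is_chain {p,x,q}" using assms unfolding is_chain_def by auto
  then obtain E where E: "E \<in> max_chains X" "{p,x,q} \<subseteq> E" using chain_ext[OF fin, of "{p,x,q}"] assms by auto
  then obtain s F g where "goodg X \<psi> s E F g" using ch by blast
  then show ?thesis using triple_good[OF E(1)] E assms by (cases s) auto
qed

lemma triple_not_both:
  assumes "p \<in> X" "x \<in> X" "q \<in> X" "p < x" "x < q" "tI x p q" "tD x p q"
  shows False
  using psi_basis[of p x] psi_basis[of x q] assms unfolding tI_def tD_def by auto

lemma lemS:
  assumes X: "p \<in> X" "p' \<in> X" "x \<in> X" "q \<in> X" "q' \<in> X"
    and o: "p < x" "p' < x" "x < q" "x < q'" and ne: "p \<noteq> p'" "q \<noteq> q'"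
    and t: "tI x p q" "tD x p' q'"
  shows False
proof -
  have b1: "fst (\<psi> (p,x)) < snd (\<psi> (p,x))" "fst (\<psi> (p',x)) < snd (\<psi> (p',x))"
    "fst (\<psi> (x,q)) < snd (\<psi> (x,q))" "fst (\<psi> (x,q')) < snd (\<psi> (x,q'))"
    using psi_basis X o by auto
  have "tI x p q' \<or> tD x p q'" "tI x p' q \<or> tD x p' q" using triple_exists X o by auto
  then show False
  proof (elim disjE)
    assume a: "tI x p q'" "tI x p' q"
    show False using a t b1 unfolding tI_def tD_def by auto
  next
    assume a: "tI x p q'" "tD x p' q"
    have "\<psi> (x,q) = \<psi> (x,q')" using a t unfolding tI_def tD_def by (simp add: prod_eq_iff)
    then show False using psi_inj[of x q x q'] X o ne by auto
  next
    assume a: "tD x p q'" "tI x p' q"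
    have "\<psi> (p,x) = \<psi> (p',x)" using a t unfolding tI_def tD_def by (simp add: prod_eq_iff)
    then show False using psi_inj[of p x p' x] X o ne by auto
  next
    assume a: "tD x p q'" "tD x p' q"
    show False using a t b1 unfolding tI_def tD_def by auto
  qed
qed

lemma cyc:
  assumes X: "p \<in> X" "p' \<in> X" "x \<in> X" "q \<in> X" "q' \<in> X"
    and o: "p < x" "p' < x" "x < q" "x < q'"
    and t: "tI x p q" "tD x p' q" "tI x p' q'" "tD x p q'"
  shows False
proof -
  have b1: "fst (\<psi> (p,x)) < snd (\<psi> (p,x))" "fst (\<psi> (p',x)) < snd (\<psi> (p',x))"
    "fst (\<psi> (x,q)) < snd (\<psi> (x,q))" "fst (\<psi> (x,q')) < snd (\<psi> (x,q'))"
    using psi_basis X o by auto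
  have "fst (\<psi> (p,x)) < fst (\<psi> (p,x))"
  proof -
    have e1: "snd (\<psi> (p,x)) = fst (\<psi> (x,q))" using t(1) unfolding tI_def .
    have e2: "snd (\<psi> (x,q)) = fst (\<psi> (p',x))" using t(2) unfolding tD_def .
    have e3: "snd (\<psi> (p',x)) = fst (\<psi> (x,q'))" using t(3) unfolding tI_def .
    have e4: "snd (\<psi> (x,q')) = fst (\<psi> (p,x))" using t(4) unfolding tD_def .
    from b1 e1 e2 e3 e4 show ?thesis by (metis order.strict_trans)
  qed
  then show False by simp
qed

lemma lemS2:
  assumes X: "p \<in> X" "p' \<in> X" "x \<in> X" "q \<in> X" "q' \<in> X"
    and o: "p < x" "p' < x" "x < q" "x < q'" and ne: "p \<noteq> p'" "q \<noteq> q'"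
    and t: "tI x p q" "tD x p q'"
  shows False
proof -
  have "tI x p' q' \<or> tD x p' q'" "tI x p' q \<or> tD x p' q" using triple_exists X o by auto
  moreover have "\<not> tD x p' q'" using lemS[of p p' x q q'] X o ne t by auto
  moreover have "\<not> tI x p' q" using lemS[of p' p x q q'] X o ne t by auto
  ultimately show False using cyc[of p p' x q q'] X o t by auto
qed

lemma lemS2':
  assumes X: "p \<in> X" "p' \<in> X" "x \<in> X" "q \<in> X" "q' \<in> X"
    and o: "p < x" "p' < x" "x < q" "x < q'" and ne: "p \<noteq> p'" "q \<noteq> q'"
    and t: "tI x p q" "tD x p' q"
  shows False
proof -
  have "tI x p' q' \<or> tD x p' q'" "tI x p q' \<or> tD x p q'" using triple_exists X o by auto
  moreover have "\<not> tD x p' q'" using lemS[of p p' x q q'] X o ne t by auto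
  moreover have "\<not> tI x p q'" using lemS[of p p' x q' q] X o ne t by auto
  ultimately show False using cyc[of p p' x q q'] X o t by auto
qed

lemma image_good_incr:
  assumes "E \<in> max_chains X" "goodg X \<psi> True E F g" "y \<in> E" "y' \<in> E" "y < y'"
  shows "g y < g y'"
proof -
  have "\<psi> (y,y') = (g y, g y')" using assms unfolding goodg_def by auto
  then show ?thesis using psi_basis[of y y'] assms maxch_sub by force
qed

lemma image_good_decr:
  assumes "E \<in> max_chains X" "goodg X \<psi> False E F g" "y \<in> E" "y' \<in> E" "y < y'"
  shows "g y' < g y"
proof -
  have "\<psi> (y,y') = (g y', g y)" using assms unfolding goodg_def by auto
  then show ?thesis using psi_basis[of y y'] assms maxch_sub by force
qed

lemma lemS3:
  assumes X: "p \<in> X" "x \<in> X" "q \<in> X" "q' \<in> X"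
    and o: "p < x" "x < q" "x < q'"
    and t: "tI x p q" "tD x p q'" and only: "\<forall>y\<in>X. y < x \<longrightarrow> y = p"
  shows False
proof -
  have "is_chain {p,x,q}" using X o unfolding is_chain_def by auto
  then obtain E where E: "E \<in> max_chains X" "{p,x,q} \<subseteq> E" using chain_ext[OF fin, of "{p,x,q}"] X by auto
  then obtain s F g where g: "goodg X \<psi> s E F g" using ch by blast
  have s: "s" using triple_good[OF E(1) g, of p x q] E triple_not_both[of p x q] X o t by auto
  have gp: "g p = fst (\<psi> (p,x))" using g s E o unfolding goodg_def by auto
  define e where "e = fst (\<psi> (x,q'))"
  have e: "e \<in> X" "e < fst (\<psi> (p,x))" using psi_basis[of x q'] X o t unfolding e_def tD_def by auto
  have ge: "\<forall>y\<in>E. fst (\<psi> (p,x)) \<le> g y"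
  proof
    fix y assume y: "y \<in> E"
    have "y \<le> x \<or> x \<le> y" using maxch_chain[OF E(1)] y E unfolding is_chain_def by auto
    then show "fst (\<psi> (p,x)) \<le> g y"
    proof
      assume "y \<le> x"
      moreover have "y \<in> X" using y E(1) maxch_sub by blast
      ultimately have "y = p \<or> y = x" using only by (auto simp: order.order_iff_strict)
      then show ?thesis using image_good_incr[OF E(1) g[simplified s], of p x] E o gp
        by auto
    next
      assume "x \<le> y"
      then have "x = y \<or> x < y" by (auto simp: order.order_iff_strict)
      then have "g x \<le> g y" using image_good_incr[OF E(1) g[simplified s], of x y] y E
        by (elim disjE) (simp_all add: less_imp_le)
      moreover have "g p < g x" using image_good_incr[OF E(1) g[simplified s], of p x] E o by auto
      ultimately show ?thesis using gp by auto
    qed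
  qed
  have F: "F = g ` E" "F \<in> max_chains X" using g unfolding goodg_def bij_betw_def by auto
  have "\<forall>k\<in>F. k \<le> e \<or> e \<le> k"
  proof
    fix k assume "k \<in> F"
    then obtain y where "y \<in> E" "k = g y" using F(1) by blast
    then have "fst (\<psi> (p,x)) \<le> k" using ge by blast
    then have "e < k" using e(2) by (rule order.strict_trans2[rotated])
    then show "k \<le> e \<or> e \<le> k" by (simp add: less_imp_le)
  qed
  then have "e \<in> F" using maxch_add[OF F(2) e(1)] by blast
  then obtain y where "y \<in> E" "e = g y" using F(1) by blast
  then have "fst (\<psi> (p,x)) \<le> e" using ge by blast
  then show False using e(2) by simp
qed

lemma lemS3':
  assumes X: "p \<in> X" "p' \<in> X" "x \<in> X" "q \<in> X"
    and o: "p < x" "p' < x" "x < q"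
    and t: "tI x p q" "tD x p' q" and only: "\<forall>y\<in>X. x < y \<longrightarrow> y = q"
  shows False
proof -
  have "is_chain {p,x,q}" using X o unfolding is_chain_def by auto
  then obtain E where E: "E \<in> max_chains X" "{p,x,q} \<subseteq> E" using chain_ext[OF fin, of "{p,x,q}"] X by auto
  then obtain s F g where g: "goodg X \<psi> s E F g" using ch by blast
  have s: "s" using triple_good[OF E(1) g, of p x q] E triple_not_both[of p x q] X o t by auto
  have gq: "g q = snd (\<psi> (x,q))" using g s E o unfolding goodg_def by auto
  define e where "e = snd (\<psi> (p',x))"
  have e: "e \<in> X" "snd (\<psi> (x,q)) < e" using psi_basis[of p' x] X o t unfolding e_def tD_def by auto
  have ge: "\<forall>y\<in>E. g y \<le> snd (\<psi> (x,q))"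
  proof
    fix y assume y: "y \<in> E"
    have "y \<le> x \<or> x \<le> y" using maxch_chain[OF E(1)] y E unfolding is_chain_def by auto
    then show "g y \<le> snd (\<psi> (x,q))"
    proof
      assume "x \<le> y"
      moreover have "y \<in> X" using y E(1) maxch_sub by blast
      ultimately have "y = q \<or> y = x" using only by (auto simp: order.order_iff_strict)
      then show ?thesis using image_good_incr[OF E(1) g[simplified s], of x q] E o gq
        by auto
    next
      assume "y \<le> x"
      then have "y = x \<or> y < x" by (auto simp: order.order_iff_strict)
      then have "g y \<le> g x" using image_good_incr[OF E(1) g[simplified s], of y x] y E
        by (elim disjE) (simp_all add: less_imp_le)
      moreover have "g x < g q" using image_good_incr[OF E(1) g[simplified s], of x q] E o by auto
      ultimately show ?thesis using gq by auto
    qed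
  qed
  have F: "F = g ` E" "F \<in> max_chains X" using g unfolding goodg_def bij_betw_def by auto
  have "\<forall>k\<in>F. k \<le> e \<or> e \<le> k"
  proof
    fix k assume "k \<in> F"
    then obtain y where "y \<in> E" "k = g y" using F(1) by blast
    then have "k \<le> snd (\<psi> (x,q))" using ge by blast
    then have "k < e" using e(2) by (rule order.strict_trans1)
    then show "k \<le> e \<or> e \<le> k" by (simp add: less_imp_le)
  qed
  then have "e \<in> F" using maxch_add[OF F(2) e(1)] by blast
  then obtain y where "y \<in> E" "e = g y" using F(1) by blast
  then have "e \<le> snd (\<psi> (x,q))" using ge by blast
  then show False using e(2) by simp
qed

lemma uniform:
  assumes X: "p \<in> X" "p' \<in> X" "x \<in> X" "q \<in> X" "q' \<in> X"
    and o: "p < x" "p' < x" "x < q" "x < q'"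
    and t: "tI x p q" "tD x p' q'"
  shows False
proof (cases "p = p'")
  case True
  have qq: "q \<noteq> q'"
  proof
    assume "q = q'"
    then show False using triple_not_both[of p x q] X(1,3,4) o(1,3) t True by blast
  qed
  show False
  proof (cases "\<exists>p''\<in>X. p'' < x \<and> p'' \<noteq> p")
    case True
    then obtain p'' where p'': "p'' \<in> X" "p'' < x" "p'' \<noteq> p" by blast
    have t2: "tD x p q'" using t(2) \<open>p = p'\<close> by simp
    show False using lemS2[OF X(1) p''(1) X(3,4,5) o(1) p''(2) o(3,4) p''(3)[symmetric] qq t(1) t2] .
  next
    case False
    then have only: "\<forall>y\<in>X. y < x \<longrightarrow> y = p" by blast
    have t2: "tD x p q'" using t(2) \<open>p = p'\<close> by simp
    show False using lemS3[OF X(1,3,4,5) o(1,3,4) t(1) t2 only] .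
  qed
next
  case pp: False
  show False
  proof (cases "q = q'")
    case True
    have t2: "tD x p' q" using t(2) True by simp
    show False
    proof (cases "\<exists>q''\<in>X. x < q'' \<and> q'' \<noteq> q")
      case True
      then obtain q'' where q'': "q'' \<in> X" "x < q''" "q'' \<noteq> q" by blast
      show False using lemS2'[OF X(1,2,3,4) q''(1) o(1,2,3) q''(2) pp q''(3)[symmetric] t(1) t2] .
    next
      case False
      then have only: "\<forall>y\<in>X. x < y \<longrightarrow> y = q" by blast
      show False using lemS3'[OF X(1,2,3,4) o(1,2,3) t(1) t2 only] .
    qed
  next
    case False
    show False using lemS[OF X o pp False t] .
  qed
qed

lemma step1:
  assumes K: "K \<in> max_chains X" "K' \<in> max_chains X" "x \<in> K" "x \<in> K'"
    and nx: "x \<notin> minimal_elems X" "x \<notin> maximal_elems X"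
    and g: "goodg X \<psi> s K D f" "goodg X \<psi> s' K' D' f'"
  shows "s = s' \<and> f x = f' x"
proof -
  obtain a where a: "a \<in> K" "a < x" using maxch_below[OF K(1) K(3) nx(1)] by blast
  obtain b where b: "b \<in> K" "x < b" using maxch_above[OF K(1) K(3) nx(2)] by blast
  obtain a' where a': "a' \<in> K'" "a' < x" using maxch_below[OF K(2) K(4) nx(1)] by blast
  obtain b' where b': "b' \<in> K'" "x < b'" using maxch_above[OF K(2) K(4) nx(2)] by blast
  have X: "a \<in> X" "b \<in> X" "a' \<in> X" "b' \<in> X" "x \<in> X"
    using a(1) b(1) a'(1) b'(1) K(3) maxch_sub[OF K(1)] maxch_sub[OF K(2)] by blast+
  have t1: "(s \<longrightarrow> tI x a b) \<and> (\<not> s \<longrightarrow> tD x a b)"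
    using triple_good[OF K(1) g(1) a(1) K(3) b(1) a(2) b(2)] .
  have t2: "(s' \<longrightarrow> tI x a' b') \<and> (\<not> s' \<longrightarrow> tD x a' b')"
    using triple_good[OF K(2) g(2) a'(1) K(4) b'(1) a'(2) b'(2)] .
  have ss: "s = s'"
  proof (rule ccontr)
    assume ne: "s \<noteq> s'"
    show False
    proof (cases s)
      case True
      then have "tI x a b" "tD x a' b'" using t1 t2 ne by auto
      then show False using uniform[OF X(1,3,5,2,4) a(2) a'(2) b(2) b'(2)] by blast
    next
      case False
      then have "tD x a b" "tI x a' b'" using t1 t2 ne by auto
      then show False using uniform[OF X(3,1,5,4,2) a'(2) a(2) b'(2) b(2)] by blast
    qed
  qed
  have ex: "tI x a b' \<or> tD x a b'" using triple_exists[OF X(1,5,4) a(2) b'(2)] .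
  have "f x = f' x"
  proof (cases s)
    case True
    have "tI x a b" using t1 True by blast
    then have "\<not> tD x a b'" using uniform[OF X(1,1,5,2,4) a(2) a(2) b(2) b'(2)] by blast
    then have tt: "tI x a b'" using ex by blast
    have "\<psi> (a,x) = (f a, f x)" using g(1) True a K(3) unfolding goodg_def by auto
    moreover have "\<psi> (x,b') = (f' x, f' b')" using g(2) True ss b' K(4) unfolding goodg_def by auto
    ultimately show ?thesis using tt unfolding tI_def by simp
  next
    case False
    have "tD x a b" using t1 False by blast
    then have "\<not> tI x a b'" using uniform[OF X(1,1,5,4,2) a(2) a(2) b'(2) b(2)] by blast
    then have tt: "tD x a b'" using ex by blast
    have "\<psi> (a,x) = (f x, f a)" using g(1) False a K(3) unfolding goodg_def by auto
    moreover have "\<psi> (x,b') = (f' b', f' x)" using g(2) False ss b' K(4) unfolding goodg_def by auto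
    ultimately show ?thesis using tt unfolding tD_def by simp
  qed
  with ss show ?thesis by blast
qed

lemma good_pos_neg:
  assumes "K \<in> max_chains X" "goodg X \<psi> s K D f" "x \<in> K"
    and nx: "x \<notin> minimal_elems X" "x \<notin> maximal_elems X"
  shows "f x \<notin> minimal_elems X \<and> f x \<notin> maximal_elems X"
proof -
  obtain a where a: "a \<in> K" "a < x" using maxch_below[OF assms(1,3) nx(1)] by blast
  obtain b where b: "b \<in> K" "x < b" using maxch_above[OF assms(1,3) nx(2)] by blast
  have D: "D \<in> max_chains X" "f ` K = D" using assms(2) unfolding goodg_def bij_betw_def by auto
  have fa: "f a \<in> X" "f b \<in> X" using D a(1) b(1) maxch_sub[OF D(1)] by blast+
  show ?thesis
  proof (cases s)
    case True
    have "f a < f x" "f x < f b" using image_good_incr[OF assms(1) assms(2)[simplified True]] a b assms(3) by auto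
    then show ?thesis using fa unfolding minimal_elems_def maximal_elems_def by blast
  next
    case False
    have "f x < f a" "f b < f x" using image_good_decr[OF assms(1) assms(2)[simplified False]] a b assms(3) by auto
    then show ?thesis using fa unfolding minimal_elems_def maximal_elems_def by blast
  qed
qed

lemma linked_pres:
  assumes "K \<in> max_chains X" "K' \<in> max_chains X" "goodg X \<psi> s K D f" "goodg X \<psi> s' K' D' f'"
    and "(K,K') \<in> linked_rel X"
  shows "(D,D') \<in> linked_rel X"
proof -
  obtain x where x: "x \<in> K" "x \<in> K'" "x \<notin> minimal_elems X" "x \<notin> maximal_elems X"
    using assms(5) unfolding linked_rel_def by blast
  have e: "f x = f' x" using step1[OF assms(1,2) x assms(3,4)] by blast
  have "f x \<in> D" "f' x \<in> D'" using assms(3,4) x unfolding goodg_def bij_betw_def by auto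
  moreover have "D \<in> max_chains X" "D' \<in> max_chains X" using assms(3,4) unfolding goodg_def by auto
  moreover have "f x \<notin> minimal_elems X \<and> f x \<notin> maximal_elems X" using good_pos_neg[OF assms(1,3) x(1,3,4)] .
  ultimately show ?thesis using e unfolding linked_rel_def by auto
qed

end


lemma rtranclp_first:
  assumes "R\<^sup>*\<^sup>* x y" "y \<noteq> x"
  shows "\<exists>z. R x z \<and> z \<noteq> x"
  using assms
proof (induction rule: converse_rtranclp_induct)
  case base then show ?case by simp
next
  case (step w v)
  then show ?case by (cases "v = w") auto
qed

definition Th :: "'a::order set \<Rightarrow> ('a \<times> 'a \<Rightarrow> 'a \<times> 'a) \<Rightarrow> 'a set \<Rightarrow> 'a set" where
  "Th X \<theta> K = (\<Union>{{fst (\<theta> (a,b)), snd (\<theta> (a,b))} | a b. a \<in> K \<and> b \<in> K \<and> a < b})"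

definition prs :: "'a::order set \<Rightarrow> ('a \<times> 'a) set" where
  "prs K = {(a,b). a \<in> K \<and> b \<in> K \<and> a < b}"

locale thctx =
  fixes X :: "'a::order set" and \<theta> :: "'a \<times> 'a \<Rightarrow> 'a \<times> 'a"
  assumes fin: "finite X" and conn: "connected_poset X" and thM: "\<theta> \<in> M_set X"
    and adm: "admissible X \<theta>" and two: "\<exists>a\<in>X. \<exists>b\<in>X. a \<noteq> b"
begin

lemma bij: "bij_betw \<theta> (basis X) (basis X)" using thM unfolding M_set_def by blast

lemma incr_good: "incr_to X \<theta> K D \<Longrightarrow> \<exists>f. goodg X \<theta> True K D f"
  unfolding incr_to_def goodg_def by auto

lemma decr_good: "decr_to X \<theta> K D \<Longrightarrow> \<exists>f. goodg X \<theta> False K D f"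
  unfolding decr_to_def goodg_def by auto

lemma chain_good: "K \<in> max_chains X \<Longrightarrow> \<exists>s D f. goodg X \<theta> s K D f"
  using thM incr_good decr_good unfolding M_set_def by blast

sublocale m: mctx X \<theta>
  using fin bij chain_good unfolding mctx_def bij_betw_def by blast

lemma maxch_two:
  assumes K: "K \<in> max_chains X"
  shows "\<exists>a\<in>K. \<exists>b\<in>K. a < b"
proof -
  obtain x0 where x0: "x0 \<in> X" using two by blast
  have "K \<noteq> {}"
  proof
    assume "K = {}"
    then have "K \<subset> {x0}" by auto
    moreover have "is_chain {x0}" unfolding is_chain_def by auto
    ultimately show False using K x0 unfolding max_chains_def by blast
  qed
  then obtain x where x: "x \<in> K" by blast
  have xX: "x \<in> X" using x K maxch_sub by blast
  obtain y where y: "y \<in> X" "y \<noteq> x" using two by blast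
  have "(\<lambda>a b. a \<in> X \<and> b \<in> X \<and> (a \<le> b \<or> b \<le> a))\<^sup>*\<^sup>* x y"
    using conn xX y unfolding connected_poset_def by blast
  then obtain z where z: "z \<in> X" "x \<le> z \<or> z \<le> x" "z \<noteq> x"
    using rtranclp_first[of _ x y] y by blast
  show ?thesis
  proof (cases "\<exists>k\<in>K. k \<noteq> x")
    case True
    then obtain k where k: "k \<in> K" "k \<noteq> x" by blast
    then have "k \<le> x \<or> x \<le> k" using maxch_chain[OF K] x unfolding is_chain_def by blast
    then show ?thesis using k x by (auto simp: order.order_iff_strict)
  next
    case False
    then have Kx: "K = {x}" using x by blast
    have "is_chain {x, z}" using z unfolding is_chain_def by auto
    moreover have "{x,z} \<subseteq> X" using z xX by auto
    moreover have "K \<subset> {x, z}" using Kx z by auto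
    ultimately show ?thesis using K unfolding max_chains_def by blast
  qed
qed

lemma good_D:
  assumes K: "K \<in> max_chains X" and g: "goodg X \<theta> s K D f"
  shows "D = Th X \<theta> K"
proof
  have fK: "f ` K = D" using g unfolding goodg_def bij_betw_def by auto
  have th: "\<And>a b. a \<in> K \<Longrightarrow> b \<in> K \<Longrightarrow> a < b \<Longrightarrow> \<theta> (a,b) = (if s then (f a, f b) else (f b, f a))"
    using g unfolding goodg_def by blast
  show "D \<subseteq> Th X \<theta> K"
  proof
    fix d assume "d \<in> D"
    then obtain k where k: "k \<in> K" "d = f k" using fK by blast
    obtain a b where ab: "a \<in> K" "b \<in> K" "a < b" using maxch_two[OF K] by blast
    obtain k' where k': "k' \<in> K" "k' \<noteq> k"
      using ab by (metis order.irrefl)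
    have "k \<le> k' \<or> k' \<le> k" using maxch_chain[OF K] k k' unfolding is_chain_def by blast
    then have "k < k' \<or> k' < k" using k' by (auto simp: order.order_iff_strict)
    then show "d \<in> Th X \<theta> K"
    proof
      assume "k < k'"
      then have "d \<in> {fst (\<theta> (k,k')), snd (\<theta> (k,k'))}" using th[OF k(1) k'(1)] k by (cases s) auto
      then show ?thesis unfolding Th_def using k k' \<open>k < k'\<close> by blast
    next
      assume "k' < k"
      then have "d \<in> {fst (\<theta> (k',k)), snd (\<theta> (k',k))}" using th[OF k'(1) k(1)] k by (cases s) auto
      then show ?thesis unfolding Th_def using k k' \<open>k' < k\<close> by blast
    qed
  qed
  show "Th X \<theta> K \<subseteq> D"
  proof
    fix d assume "d \<in> Th X \<theta> K"
    then obtain a b where ab: "a \<in> K" "b \<in> K" "a < b" "d \<in> {fst (\<theta> (a,b)), snd (\<theta> (a,b))}"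
      unfolding Th_def by blast
    then have "d = f a \<or> d = f b" using th[OF ab(1,2,3)] by (cases s) auto
    then show "d \<in> D" using fK ab by blast
  qed
qed

lemma Th_good: "K \<in> max_chains X \<Longrightarrow> \<exists>s f. goodg X \<theta> s K (Th X \<theta> K) f"
  using chain_good good_D by blast

lemma Th_mc: "K \<in> max_chains X \<Longrightarrow> Th X \<theta> K \<in> max_chains X"
  using Th_good unfolding goodg_def by blast

lemma prs_img:
  assumes K: "K \<in> max_chains X" and g: "goodg X \<theta> s K D f"
  shows "\<theta> ` prs K = prs D"
proof
  have fK: "f ` K = D" using g unfolding goodg_def bij_betw_def by auto
  have th: "\<And>a b. a \<in> K \<Longrightarrow> b \<in> K \<Longrightarrow> a < b \<Longrightarrow> \<theta> (a,b) = (if s then (f a, f b) else (f b, f a))"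
    using g unfolding goodg_def by blast
  have KX: "K \<subseteq> X" using K maxch_sub by blast
  show "\<theta> ` prs K \<subseteq> prs D"
  proof
    fix e assume "e \<in> \<theta> ` prs K"
    then obtain a b where ab: "a \<in> K" "b \<in> K" "a < b" "e = \<theta> (a,b)" unfolding prs_def by blast
    have o: "fst (\<theta> (a,b)) < snd (\<theta> (a,b))" using m.psi_basis ab KX by blast
    show "e \<in> prs D"
    proof (cases s)
      case True
      then show ?thesis using th[OF ab(1,2,3)] ab o fK unfolding prs_def by auto
    next
      case False
      then show ?thesis using th[OF ab(1,2,3)] ab o fK unfolding prs_def by auto
    qed
  qed
  show "prs D \<subseteq> \<theta> ` prs K"
  proof
    fix e assume "e \<in> prs D"
    then obtain d d' where dd: "d \<in> D" "d' \<in> D" "d < d'" "e = (d,d')" unfolding prs_def by blast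
    obtain a where a: "a \<in> K" "d = f a" using fK dd by blast
    obtain b where b: "b \<in> K" "d' = f b" using fK dd by blast
    have "a \<noteq> b" using dd a b by auto
    then have "a < b \<or> b < a" using maxch_chain[OF K] a b unfolding is_chain_def by (auto simp: order.order_iff_strict)
    then show "e \<in> \<theta> ` prs K"
    proof
      assume ab: "a < b"
      have o: "fst (\<theta> (a,b)) < snd (\<theta> (a,b))" using m.psi_basis ab a b KX by blast
      show ?thesis
      proof (cases s)
        case True
        then have "\<theta> (a,b) = e" using th[OF a(1) b(1) ab] dd a b by auto
        then show ?thesis using a b ab unfolding prs_def by force
      next
        case False
        then have "\<theta> (a,b) = (d', d)" using th[OF a(1) b(1) ab] a b by auto
        then show ?thesis using o dd by auto
      qed
    next
      assume ab: "b < a"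
      have o: "fst (\<theta> (b,a)) < snd (\<theta> (b,a))" using m.psi_basis ab a b KX by blast
      show ?thesis
      proof (cases s)
        case True
        then have "\<theta> (b,a) = (d', d)" using th[OF b(1) a(1) ab] a b by auto
        then show ?thesis using o dd by auto
      next
        case False
        then have "\<theta> (b,a) = e" using th[OF b(1) a(1) ab] dd a b by auto
        then show ?thesis using a b ab unfolding prs_def by force
      qed
    qed
  qed
qed

lemma prs_basis: "K \<subseteq> X \<Longrightarrow> prs K \<subseteq> basis X"
  unfolding prs_def basis_def by auto

lemma prs_elems:
  assumes K: "K \<in> max_chains X"
  shows "K = {a. \<exists>b. (a,b) \<in> prs K \<or> (b,a) \<in> prs K}"
proof
  show "K \<subseteq> {a. \<exists>b. (a,b) \<in> prs K \<or> (b,a) \<in> prs K}"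
  proof
    fix k assume k: "k \<in> K"
    obtain a b where ab: "a \<in> K" "b \<in> K" "a < b" using maxch_two[OF K] by blast
    obtain k' where k': "k' \<in> K" "k' \<noteq> k" using ab by (metis order.irrefl)
    have "k \<le> k' \<or> k' \<le> k" using maxch_chain[OF K] k k' unfolding is_chain_def by blast
    then have "k < k' \<or> k' < k" using k' by (auto simp: order.order_iff_strict)
    then show "k \<in> {a. \<exists>b. (a,b) \<in> prs K \<or> (b,a) \<in> prs K}" using k k' unfolding prs_def by blast
  qed
  show "{a. \<exists>b. (a,b) \<in> prs K \<or> (b,a) \<in> prs K} \<subseteq> K" unfolding prs_def by blast
qed

lemma Th_inj: "inj_on (Th X \<theta>) (max_chains X)"
proof (rule inj_onI)
  fix K K' assume K: "K \<in> max_chains X" "K' \<in> max_chains X" "Th X \<theta> K = Th X \<theta> K'"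
  obtain s f where g: "goodg X \<theta> s K (Th X \<theta> K) f" using Th_good K by blast
  obtain s' f' where g': "goodg X \<theta> s' K' (Th X \<theta> K') f'" using Th_good K by blast
  have "\<theta> ` prs K = \<theta> ` prs K'" using prs_img[OF K(1) g] prs_img[OF K(2) g'] K(3) by simp
  moreover have sub: "prs K \<union> prs K' \<subseteq> basis X" using prs_basis maxch_sub K(1,2) by blast
  moreover have "inj_on \<theta> (prs K \<union> prs K')" using m.inj sub by (rule inj_on_subset)
  ultimately have "prs K = prs K'" using inj_on_image_eq_iff[of \<theta> "prs K \<union> prs K'" "prs K" "prs K'"] by blast
  moreover have "K = {a. \<exists>b. (a,b) \<in> prs K \<or> (b,a) \<in> prs K}" by (rule prs_elems[OF K(1)])
  moreover have "K' = {a. \<exists>b. (a,b) \<in> prs K' \<or> (b,a) \<in> prs K'}" by (rule prs_elems[OF K(2)])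
  ultimately show "K = K'" by simp
qed

lemma mc_fin: "finite (max_chains X)"
proof -
  have "max_chains X \<subseteq> Pow X" unfolding max_chains_def by blast
  then show ?thesis using fin by (simp add: finite_subset)
qed

lemma Th_surj: "Th X \<theta> ` max_chains X = max_chains X"
  using endo_inj_surj[OF mc_fin _ Th_inj] Th_mc by blast

definition psi where "psi = inv_into (basis X) \<theta>"

lemma psi_good:
  assumes K: "K \<in> max_chains X" and g: "goodg X \<theta> s K D f"
  shows "goodg X psi s D K (inv_into K f)"
proof -
  have bf: "bij_betw f K D" and D: "D \<in> max_chains X" using g unfolding goodg_def by auto
  have th: "\<And>a b. a \<in> K \<Longrightarrow> b \<in> K \<Longrightarrow> a < b \<Longrightarrow> \<theta> (a,b) = (if s then (f a, f b) else (f b, f a))"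
    using g unfolding goodg_def by blast
  have KX: "K \<subseteq> X" using K maxch_sub by blast
  have fK: "f ` K = D" "inj_on f K" using bf unfolding bij_betw_def by auto
  have "\<forall>d\<in>D. \<forall>d'\<in>D. d < d' \<longrightarrow> psi (d, d') = (if s then (inv_into K f d, inv_into K f d') else (inv_into K f d', inv_into K f d))"
  proof (intro ballI impI)
    fix d d' assume dd: "d \<in> D" "d' \<in> D" "d < d'"
    obtain a where a: "a \<in> K" "d = f a" using fK dd by blast
    obtain b where b: "b \<in> K" "d' = f b" using fK dd by blast
    have ia: "inv_into K f d = a" "inv_into K f d' = b" using a b fK(2) by (auto intro: inv_into_f_f)
    have "a \<noteq> b" using dd a b by auto
    then have "a < b \<or> b < a" using maxch_chain[OF K] a b unfolding is_chain_def by (auto simp: order.order_iff_strict)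
    then show "psi (d, d') = (if s then (inv_into K f d, inv_into K f d') else (inv_into K f d', inv_into K f d))"
    proof
      assume ab: "a < b"
      have o: "fst (\<theta> (a,b)) < snd (\<theta> (a,b))" using m.psi_basis ab a b KX by blast
      have bas: "(a,b) \<in> basis X" using a b ab KX unfolding basis_def by auto
      show ?thesis
      proof (cases s)
        case True
        then have "\<theta> (a,b) = (d,d')" using th[OF a(1) b(1) ab] a b by auto
        then have "psi (d,d') = (a,b)" unfolding psi_def using inv_into_f_f[OF m.inj bas] by simp
        then show ?thesis using True ia by simp
      next
        case False
        then have "\<theta> (a,b) = (d', d)" using th[OF a(1) b(1) ab] a b by auto
        then show ?thesis using o dd by auto
      qed
    next
      assume ab: "b < a"
      have o: "fst (\<theta> (b,a)) < snd (\<theta> (b,a))" using m.psi_basis ab a b KX by blast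
      have bas: "(b,a) \<in> basis X" using a b ab KX unfolding basis_def by auto
      show ?thesis
      proof (cases s)
        case True
        then have "\<theta> (b,a) = (d', d)" using th[OF b(1) a(1) ab] a b by auto
        then show ?thesis using o dd by auto
      next
        case False
        then have "\<theta> (b,a) = (d,d')" using th[OF b(1) a(1) ab] a b by auto
        then have "psi (d,d') = (b,a)" unfolding psi_def using inv_into_f_f[OF m.inj bas] by simp
        then show ?thesis using False ia by simp
      qed
    qed
  qed
  moreover have "bij_betw (inv_into K f) D K" using bf by (rule bij_betw_inv_into)
  ultimately show ?thesis using K unfolding goodg_def by blast
qed

sublocale p: mctx X psi
proof
  show "finite X" by (rule fin)
  show "inj_on psi (basis X)" unfolding psi_def using bij by (simp add: bij_betw_def inj_on_inv_into)
  show "psi ` basis X \<subseteq> basis X" unfolding psi_def using bij by (metis bij_betw_def image_subsetI inv_into_into)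
  show "\<forall>E\<in>max_chains X. \<exists>s F g. goodg X psi s E F g"
  proof
    fix E assume E: "E \<in> max_chains X"
    then obtain K where K: "K \<in> max_chains X" "E = Th X \<theta> K" using Th_surj by blast
    then obtain s f where "goodg X \<theta> s K E f" using Th_good by blast
    then show "\<exists>s F g. goodg X psi s E F g" using psi_good K by blast
  qed
qed

end


definition wt :: "'a::order set \<Rightarrow> ('a \<times> 'a \<Rightarrow> 'a \<times> 'a) \<Rightarrow> 'a \<Rightarrow> 'a \<Rightarrow> 'a \<Rightarrow> int" where
  "wt X \<theta> z a b = (if z \<in> X then
      of_bool (a < b \<and> (\<exists>w\<in>X. z < w \<and> \<theta> (z, w) = (a, b)))
    - of_bool (b < a \<and> (\<exists>w\<in>X. z < w \<and> \<theta> (z, w) = (b, a)))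
    - of_bool (a < b \<and> (\<exists>w\<in>X. w < z \<and> \<theta> (w, z) = (a, b)))
    + of_bool (b < a \<and> (\<exists>w\<in>X. w < z \<and> \<theta> (w, z) = (b, a))) else 0)"

definition walk :: "'a::order set \<Rightarrow> nat \<Rightarrow> (nat \<Rightarrow> 'a) \<Rightarrow> bool" where
  "walk X m u \<longleftrightarrow> (\<forall>i\<le>m. u i \<in> X) \<and>
      (\<forall>i<m. covers X (u i) (u (Suc i)) \<or> covers X (u (Suc i)) (u i))"

definition W :: "'a::order set \<Rightarrow> ('a \<times> 'a \<Rightarrow> 'a \<times> 'a) \<Rightarrow> 'a \<Rightarrow> nat \<Rightarrow> (nat \<Rightarrow> 'a) \<Rightarrow> int" where
  "W X \<theta> z m u = (\<Sum>i<m. wt X \<theta> z (u i) (u (Suc i)))"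

lemma wt_anti: "wt X \<theta> z a b = - wt X \<theta> z b a"
  unfolding wt_def by auto

lemma wt_out: "z \<notin> X \<Longrightarrow> wt X \<theta> z a b = 0"
  unfolding wt_def by auto

lemma card_sum_int: "int (card {i. i < m \<and> P i}) = (\<Sum>i<m. of_bool (P i))" for m :: nat
proof (induction m)
  case 0 then show ?case by simp
next
  case (Suc m)
  show ?case
  proof (cases "P m")
    case True
    then have "{i. i < Suc m \<and> P i} = insert m {i. i < m \<and> P i}" by auto
    then show ?thesis using Suc True by simp
  next
    case False
    then have "{i. i < Suc m \<and> P i} = {i. i < m \<and> P i}" using less_Suc_eq by auto
    then show ?thesis using Suc False by simp
  qed
qed

lemma adm_W:
  assumes "admissible X \<theta>" "closed_walk X m u" "z \<in> X"
  shows "W X \<theta> z m u = 0"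
proof -
  have e: "int (s_plus X \<theta> m u z) - int (s_minus X \<theta> m u z) = int (t_plus X \<theta> m u z) - int (t_minus X \<theta> m u z)"
    using assms unfolding admissible_def by blast
  have "W X \<theta> z m u = int (s_plus X \<theta> m u z) - int (s_minus X \<theta> m u z) - int (t_plus X \<theta> m u z) + int (t_minus X \<theta> m u z)"
    unfolding W_def wt_def s_plus_def s_minus_def t_plus_def t_minus_def card_sum_int
    using assms(3) by (simp add: sum.distrib sum_subtractf)
  then show ?thesis using e by simp
qed

lemma sum_split_nat: "(\<Sum>i<m1 + m2. f i) = (\<Sum>i<m1. f i) + (\<Sum>j<m2. f (m1 + j))" for m1 m2 :: nat and f :: "nat \<Rightarrow> int"
  by (induction m2) auto

definition wapp :: "nat \<Rightarrow> (nat \<Rightarrow> 'a) \<Rightarrow> (nat \<Rightarrow> 'a) \<Rightarrow> nat \<Rightarrow> 'a" where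
  "wapp m1 u1 u2 = (\<lambda>i. if i \<le> m1 then u1 i else u2 (i - m1))"

lemma wapp_walk:
  assumes "walk X m1 u1" "walk X m2 u2" "u1 m1 = u2 0"
  shows "walk X (m1 + m2) (wapp m1 u1 u2)"
  unfolding walk_def
proof (intro conjI allI impI)
  fix i assume "i \<le> m1 + m2"
  then show "wapp m1 u1 u2 i \<in> X" using assms unfolding walk_def wapp_def by auto
next
  fix i assume i: "i < m1 + m2"
  show "covers X (wapp m1 u1 u2 i) (wapp m1 u1 u2 (Suc i)) \<or> covers X (wapp m1 u1 u2 (Suc i)) (wapp m1 u1 u2 i)"
  proof (cases "i < m1")
    case True
    then show ?thesis using assms(1) unfolding walk_def wapp_def by auto
  next
    case False
    then have "i - m1 < m2" "Suc i - m1 = Suc (i - m1)" using i by auto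
    moreover have "wapp m1 u1 u2 i = u2 (i - m1)" using False assms(3) unfolding wapp_def by auto
    moreover have "wapp m1 u1 u2 (Suc i) = u2 (Suc (i - m1))" using False unfolding wapp_def by (simp add: Suc_diff_le)
    ultimately show ?thesis using assms(2) unfolding walk_def by metis
  qed
qed

lemma wapp_W:
  assumes "u1 m1 = u2 0"
  shows "W X \<theta> z (m1 + m2) (wapp m1 u1 u2) = W X \<theta> z m1 u1 + W X \<theta> z m2 u2"
proof -
  have "W X \<theta> z (m1 + m2) (wapp m1 u1 u2) = (\<Sum>i<m1. wt X \<theta> z (wapp m1 u1 u2 i) (wapp m1 u1 u2 (Suc i)))
     + (\<Sum>j<m2. wt X \<theta> z (wapp m1 u1 u2 (m1 + j)) (wapp m1 u1 u2 (Suc (m1 + j))))"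
    unfolding W_def using sum_split_nat[of "\<lambda>i. wt X \<theta> z (wapp m1 u1 u2 i) (wapp m1 u1 u2 (Suc i))"] by simp
  also have "(\<Sum>i<m1. wt X \<theta> z (wapp m1 u1 u2 i) (wapp m1 u1 u2 (Suc i))) = W X \<theta> z m1 u1"
    unfolding W_def wapp_def by (intro sum.cong) auto
  also have "(\<Sum>j<m2. wt X \<theta> z (wapp m1 u1 u2 (m1 + j)) (wapp m1 u1 u2 (Suc (m1 + j)))) = W X \<theta> z m2 u2"
    unfolding W_def wapp_def using assms by (intro sum.cong) auto
  finally show ?thesis .
qed

lemma wrev_walk:
  assumes "walk X m u"
  shows "walk X m (\<lambda>i. u (m - i))"
  unfolding walk_def
proof (intro conjI allI impI)
  fix i assume "i \<le> m" then show "u (m - i) \<in> X" using assms unfolding walk_def by auto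
next
  fix i assume i: "i < m"
  then have "m - i = Suc (m - Suc i)" "m - Suc i < m" by auto
  then show "covers X (u (m - i)) (u (m - Suc i)) \<or> covers X (u (m - Suc i)) (u (m - i))"
    using assms unfolding walk_def by metis
qed

lemma wrev_W: "W X \<theta> z m (\<lambda>i. u (m - i)) = - W X \<theta> z m u"
proof -
  have "W X \<theta> z m (\<lambda>i. u (m - i)) = (\<Sum>i<m. wt X \<theta> z (u (m - i)) (u (m - Suc i)))"
    unfolding W_def by simp
  also have "\<dots> = (\<Sum>i<m. (\<lambda>j. wt X \<theta> z (u (Suc j)) (u j)) (m - Suc i))"
    by (intro sum.cong) (auto simp: Suc_diff_Suc)
  also have "\<dots> = (\<Sum>j<m. wt X \<theta> z (u (Suc j)) (u j))"
    by (rule sum.nat_diff_reindex)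
  also have "\<dots> = - W X \<theta> z m u" unfolding W_def
    by (subst wt_anti) (simp add: sum_negf)
  finally show ?thesis .
qed

definition reach :: "'a::order set \<Rightarrow> 'a \<Rightarrow> 'a \<Rightarrow> bool" where
  "reach X a b \<longleftrightarrow> (\<exists>m u. walk X m u \<and> u 0 = a \<and> u m = b)"

lemma reach_refl: "a \<in> X \<Longrightarrow> reach X a a"
  unfolding reach_def walk_def by (rule exI[of _ 0]) auto

lemma reach_trans: "reach X a b \<Longrightarrow> reach X b c \<Longrightarrow> reach X a c"
proof -
  assume "reach X a b" "reach X b c"
  then obtain m1 u1 m2 u2 where w: "walk X m1 u1" "u1 0 = a" "u1 m1 = b" "walk X m2 u2" "u2 0 = b" "u2 m2 = c"
    unfolding reach_def by blast
  have "walk X (m1 + m2) (wapp m1 u1 u2)" using wapp_walk w by fastforce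
  moreover have "wapp m1 u1 u2 0 = a" "wapp m1 u1 u2 (m1 + m2) = c" using w unfolding wapp_def by auto
  ultimately show ?thesis unfolding reach_def by blast
qed

lemma reach_sym: "reach X a b \<Longrightarrow> reach X b a"
proof -
  assume "reach X a b"
  then obtain m u where "walk X m u" "u 0 = a" "u m = b" unfolding reach_def by blast
  then show ?thesis unfolding reach_def using wrev_walk by fastforce
qed

lemma reach_cover: "covers X a b \<Longrightarrow> reach X a b"
proof -
  assume c: "covers X a b"
  let ?u = "\<lambda>i::nat. if i = 0 then a else b"
  have "walk X 1 ?u" using c unfolding walk_def covers_def by auto
  then show ?thesis unfolding reach_def by force
qed

lemma reach_le:
  assumes fin: "finite X" and ab: "a \<in> X" "b \<in> X" "a \<le> b"
  shows "reach X a b"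
  using ab
proof (induction "card {z \<in> X. a < z \<and> z \<le> b}" arbitrary: a rule: less_induct)
  case less
  show ?case
  proof (cases "a = b")
    case True then show ?thesis using reach_refl less by simp
  next
    case False
    let ?S = "{z \<in> X. a < z \<and> z \<le> b}"
    have "b \<in> ?S" using less False by (auto simp: order.order_iff_strict)
    moreover have "finite ?S" using fin by simp
    ultimately obtain c where c: "c \<in> ?S" "\<And>y. y \<in> ?S \<Longrightarrow> y \<le> c \<Longrightarrow> y = c"
      using finite_has_minimal[of ?S] by blast
    have cov: "covers X a c"
    proof -
      { fix z assume z: "z \<in> X" "a < z" "z < c"
        then have "z \<in> ?S" using c(1) by (auto intro: order.trans less_imp_le)
        then have "z = c" using c(2) z by (simp add: less_imp_le)
        then have False using z by simp }
      then show ?thesis using c(1) less unfolding covers_def by auto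
    qed
    have "{z \<in> X. c < z \<and> z \<le> b} \<subset> ?S"
    proof
      show "{z \<in> X. c < z \<and> z \<le> b} \<subseteq> ?S" using c(1) by (auto intro: order.strict_trans)
      show "{z \<in> X. c < z \<and> z \<le> b} \<noteq> ?S" using c(1) by auto
    qed
    then have "card {z \<in> X. c < z \<and> z \<le> b} < card ?S" using fin by (simp add: psubset_card_mono)
    then have "reach X c b" using less.hyps[of c] c(1) less.prems by auto
    then show ?thesis using reach_trans reach_cover[OF cov] by blast
  qed
qed

context thctx
begin

lemma reach_all: "a \<in> X \<Longrightarrow> b \<in> X \<Longrightarrow> reach X a b"
proof -
  assume ab: "a \<in> X" "b \<in> X"
  have "(\<lambda>a b. a \<in> X \<and> b \<in> X \<and> (a \<le> b \<or> b \<le> a))\<^sup>*\<^sup>* a b"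
    using conn ab unfolding connected_poset_def by blast
  then show "reach X a b"
  proof (induction rule: rtranclp_induct)
    case base then show ?case by (rule reach_refl[OF ab(1)])
  next
    case (step y z)
    then have "reach X y z" using reach_le[OF fin] reach_sym by blast
    then show ?case using step reach_trans by blast
  qed
qed

definition r0 where "r0 = (SOME a. a \<in> X)"

lemma r0: "r0 \<in> X" unfolding r0_def using two by (meson someI)

definition wsel where "wsel v = (SOME p. walk X (fst p) (snd p) \<and> snd p 0 = r0 \<and> snd p (fst p) = v)"

definition H :: "'a \<Rightarrow> 'a \<Rightarrow> int" where
  "H v = (\<lambda>z. W X \<theta> z (fst (wsel v)) (snd (wsel v)))"

lemma wsel: "v \<in> X \<Longrightarrow> walk X (fst (wsel v)) (snd (wsel v)) \<and> snd (wsel v) 0 = r0 \<and> snd (wsel v) (fst (wsel v)) = v"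
proof -
  assume "v \<in> X"
  then have "reach X r0 v" using reach_all r0 by blast
  then obtain m u where "walk X m u" "u 0 = r0" "u m = v" unfolding reach_def by blast
  then have "\<exists>p. walk X (fst p) (snd p) \<and> snd p 0 = r0 \<and> snd p (fst p) = v" by (intro exI[of _ "(m,u)"]) auto
  then show ?thesis unfolding wsel_def by (rule someI_ex)
qed

lemma walk_W_eq:
  assumes "walk X m u" "u 0 = r0" "u m = v" "walk X m' u'" "u' 0 = r0" "u' m' = v" "z \<in> X"
  shows "W X \<theta> z m u = W X \<theta> z m' u'"
proof -
  have w2: "walk X m' (\<lambda>i. u' (m' - i))" using wrev_walk assms by blast
  have j: "u m = (\<lambda>i. u' (m' - i)) 0" using assms by simp
  have cw: "walk X (m + m') (wapp m u (\<lambda>i. u' (m' - i)))" using wapp_walk[OF assms(1) w2 j] .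
  have "wapp m u (\<lambda>i. u' (m' - i)) (m + m') = wapp m u (\<lambda>i. u' (m' - i)) 0"
    using assms unfolding wapp_def by auto
  then have "closed_walk X (m + m') (wapp m u (\<lambda>i. u' (m' - i)))"
    using cw unfolding closed_walk_def walk_def by blast
  then have "W X \<theta> z (m + m') (wapp m u (\<lambda>i. u' (m' - i))) = 0" using adm_W adm assms(7) by blast
  then show ?thesis using wapp_W[of u m "\<lambda>i. u' (m' - i)" X \<theta> z m'] j wrev_W[of X \<theta> z m' u'] by simp
qed

lemma H_walk:
  assumes "walk X m u" "u 0 = r0" "u m = v" "z \<in> X"
  shows "H v z = W X \<theta> z m u"
proof -
  have "v \<in> X" using assms unfolding walk_def by auto
  then show ?thesis unfolding H_def using walk_W_eq[OF _ _ _ assms(1,2,3,4)] wsel by blast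
qed

lemma H_out: "z \<notin> X \<Longrightarrow> H v z = 0"
  unfolding H_def W_def by (simp add: wt_out)

lemma H_cover:
  assumes "covers X a b"
  shows "H b z = H a z + wt X \<theta> z a b"
proof (cases "z \<in> X")
  case False then show ?thesis using H_out wt_out by simp
next
  case True
  have aX: "a \<in> X" using assms unfolding covers_def by blast
  obtain m u where w: "walk X m u" "u 0 = r0" "u m = a" using wsel[OF aX] by blast
  let ?v = "\<lambda>i::nat. if i = 0 then a else b"
  have w1: "walk X 1 ?v" using assms unfolding walk_def covers_def by auto
  have j: "u m = ?v 0" using w by simp
  have "walk X (m + 1) (wapp m u ?v)" using wapp_walk[OF w(1) w1 j] .
  moreover have "wapp m u ?v 0 = r0" "wapp m u ?v (m + 1) = b" using w unfolding wapp_def by auto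
  ultimately have "H b z = W X \<theta> z (m + 1) (wapp m u ?v)" using H_walk True by blast
  also have "\<dots> = W X \<theta> z m u + W X \<theta> z 1 ?v" using wapp_W[of u m ?v X \<theta> z 1] j by blast
  also have "W X \<theta> z m u = H a z" using H_walk w True by simp
  also have "W X \<theta> z 1 ?v = wt X \<theta> z a b" unfolding W_def by simp
  finally show ?thesis .
qed

end


lemma chain_const:
  assumes fin: "finite X" and D: "D \<in> max_chains X"
    and step: "\<And>d d'. d \<in> D \<Longrightarrow> d' \<in> D \<Longrightarrow> d < d' \<Longrightarrow> \<not> (\<exists>e\<in>D. d < e \<and> e < d') \<Longrightarrow> G d = G d'"
  shows "\<forall>d\<in>D. \<forall>d'\<in>D. G d = G d'"
proof (cases "D = {}")
  case True then show ?thesis by simp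
next
  case False
  have finD: "finite D" using fin maxch_sub[OF D] finite_subset by blast
  obtain d0 where d0: "d0 \<in> D" "\<And>y. y \<in> D \<Longrightarrow> y \<le> d0 \<Longrightarrow> y = d0"
    using finite_has_minimal[OF finD False] by blast
  have ch: "\<And>a b. a \<in> D \<Longrightarrow> b \<in> D \<Longrightarrow> a \<le> b \<or> b \<le> a" using maxch_chain[OF D] unfolding is_chain_def by blast
  have main: "\<And>d. d \<in> D \<Longrightarrow> G d = G d0"
  proof -
    fix d assume "d \<in> D"
    then show "G d = G d0"
    proof (induction "card {e \<in> D. e < d}" arbitrary: d rule: less_induct)
      case less
      show ?case
      proof (cases "\<exists>e\<in>D. e < d")
        case False
        have "d0 \<le> d \<or> d \<le> d0" using ch d0(1) less.prems by blast
        then have "d = d0"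
        proof
          assume "d \<le> d0" then show ?thesis using d0(2) less.prems by blast
        next
          assume "d0 \<le> d" then show ?thesis using False d0(1) by (auto simp: order.order_iff_strict)
        qed
        then show ?thesis by simp
      next
        case True
        let ?S = "{e \<in> D. e < d}"
        have Sne: "?S \<noteq> {}" "finite ?S" using True finD by auto
        obtain p where p: "p \<in> ?S" "\<And>y. y \<in> ?S \<Longrightarrow> p \<le> y \<Longrightarrow> y = p"
          using finite_has_maximal[OF Sne(2) Sne(1)] by blast
        have cons: "\<not> (\<exists>e\<in>D. p < e \<and> e < d)"
        proof
          assume "\<exists>e\<in>D. p < e \<and> e < d"
          then obtain e where e: "e \<in> D" "p < e" "e < d" by blast
          then have "e = p" using p(2)[of e] by (simp add: less_imp_le)
          then show False using e by simp
        qed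
        have sub: "{e \<in> D. e < p} \<subset> ?S"
        proof
          show "{e \<in> D. e < p} \<subseteq> ?S" using p(1) by (auto intro: order.strict_trans)
          show "{e \<in> D. e < p} \<noteq> ?S" using p(1) by auto
        qed
        have "card {e \<in> D. e < p} < card ?S" using psubset_card_mono[OF Sne(2) sub] .
        then have "G p = G d0" using less.hyps p(1) by blast
        moreover have "G p = G d" using step[of p d] p(1) less.prems cons by blast
        ultimately show ?thesis by simp
      qed
    qed
  qed
  show ?thesis using main by simp
qed

definition dl :: "'a \<Rightarrow> 'a \<Rightarrow> int" where "dl p = (\<lambda>z. of_bool (z = p))"

definition sg :: "bool \<Rightarrow> int" where "sg s = (if s then 1 else -1)"

context thctx
begin

lemma wt_img:
  assumes c: "covers X a b" and pq: "(p,q) \<in> basis X" and th: "\<theta> (p,q) = (a,b)"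
  shows "wt X \<theta> z a b = dl p z - dl q z"
proof (cases "z \<in> X")
  case False
  then show ?thesis using pq unfolding wt_def dl_def basis_def by auto
next
  case True
  have ab: "a < b" "\<not> b < a" using c unfolding covers_def by auto
  have pqX: "p \<in> X" "q \<in> X" "p < q" using pq unfolding basis_def by auto
  have s1: "(\<exists>w\<in>X. z < w \<and> \<theta> (z, w) = (a, b)) \<longleftrightarrow> z = p"
  proof
    assume "\<exists>w\<in>X. z < w \<and> \<theta> (z, w) = (a, b)"
    then obtain w where "w \<in> X" "z < w" "\<theta> (z,w) = \<theta> (p,q)" using th by auto
    then show "z = p" using m.psi_inj[of z w p q] True pqX by blast
  next
    assume "z = p" then show "\<exists>w\<in>X. z < w \<and> \<theta> (z, w) = (a, b)" using pqX th by blast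
  qed
  have s2: "(\<exists>w\<in>X. w < z \<and> \<theta> (w, z) = (a, b)) \<longleftrightarrow> z = q"
  proof
    assume "\<exists>w\<in>X. w < z \<and> \<theta> (w, z) = (a, b)"
    then obtain w where "w \<in> X" "w < z" "\<theta> (w,z) = \<theta> (p,q)" using th by auto
    then show "z = q" using m.psi_inj[of w z p q] True pqX by blast
  next
    assume "z = q" then show "\<exists>w\<in>X. w < z \<and> \<theta> (w, z) = (a, b)" using pqX th by blast
  qed
  show ?thesis unfolding wt_def dl_def using True ab s1 s2 by simp
qed

lemma H_img:
  assumes c: "covers X a b" and pq: "(p,q) \<in> basis X" and th: "\<theta> (p,q) = (a,b)"
  shows "H b = (\<lambda>z. H a z + dl p z - dl q z)"
  using H_cover[OF c] wt_img[OF c pq th] by fastforce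

lemma chain_rep:
  assumes K: "K \<in> max_chains X" and g: "goodg X \<theta> s K D f"
  shows "\<exists>c. \<forall>k\<in>K. H (f k) = (\<lambda>z. c z - sg s * dl k z)"
proof -
  have D: "D \<in> max_chains X" and bf: "bij_betw f K D" using g unfolding goodg_def by auto
  have th: "\<And>a b. a \<in> K \<Longrightarrow> b \<in> K \<Longrightarrow> a < b \<Longrightarrow> \<theta> (a,b) = (if s then (f a, f b) else (f b, f a))"
    using g unfolding goodg_def by blast
  have KX: "K \<subseteq> X" using K maxch_sub by blast
  have fK: "f ` K = D" "inj_on f K" using bf unfolding bij_betw_def by auto
  define gi where "gi = inv_into K f"
  have gi: "\<And>k. k \<in> K \<Longrightarrow> gi (f k) = k" unfolding gi_def using fK(2) by (simp add: inv_into_f_f)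
  define G where "G d = (\<lambda>z. H d z + sg s * dl (gi d) z)" for d
  have "\<forall>d\<in>D. \<forall>d'\<in>D. G d = G d'"
  proof (rule chain_const[OF fin D])
    fix d d' assume dd: "d \<in> D" "d' \<in> D" "d < d'" "\<not> (\<exists>e\<in>D. d < e \<and> e < d')"
    have cov: "covers X d d'" using maxch_cover[OF D dd(1,2,3,4)] .
    obtain a where a: "a \<in> K" "d = f a" using fK dd by blast
    obtain b where b: "b \<in> K" "d' = f b" using fK dd by blast
    have "a \<noteq> b" using dd a b by auto
    then have "a < b \<or> b < a" using maxch_chain[OF K] a b unfolding is_chain_def by (auto simp: order.order_iff_strict)
    then show "G d = G d'"
    proof
      assume ab: "a < b"
      have o: "fst (\<theta> (a,b)) < snd (\<theta> (a,b))" using m.psi_basis ab a b KX by blast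
      have bas: "(a,b) \<in> basis X" using a b ab KX unfolding basis_def by auto
      show ?thesis
      proof (cases s)
        case True
        then have "\<theta> (a,b) = (d,d')" using th[OF a(1) b(1) ab] a b by auto
        then have "H d' = (\<lambda>z. H d z + dl a z - dl b z)" using H_img[OF cov bas] by blast
        then show ?thesis unfolding G_def using True gi a b by (auto simp: sg_def)
      next
        case False
        then have "\<theta> (a,b) = (d', d)" using th[OF a(1) b(1) ab] a b by auto
        then show ?thesis using o dd by auto
      qed
    next
      assume ab: "b < a"
      have o: "fst (\<theta> (b,a)) < snd (\<theta> (b,a))" using m.psi_basis ab a b KX by blast
      have bas: "(b,a) \<in> basis X" using a b ab KX unfolding basis_def by auto
      show ?thesis
      proof (cases s)
        case True
        then have "\<theta> (b,a) = (d', d)" using th[OF b(1) a(1) ab] a b by auto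
        then show ?thesis using o dd by auto
      next
        case False
        then have "\<theta> (b,a) = (d,d')" using th[OF b(1) a(1) ab] a b by auto
        then have "H d' = (\<lambda>z. H d z + dl b z - dl a z)" using H_img[OF cov bas] by blast
        then show ?thesis unfolding G_def using False gi a b by (auto simp: sg_def)
      qed
    qed
  qed
  moreover obtain k0 where k0: "k0 \<in> K" using maxch_two[OF K] by blast
  ultimately have "\<forall>k\<in>K. G (f k) = G (f k0)" using fK by blast
  then have "\<forall>k\<in>K. H (f k) = (\<lambda>z. G (f k0) z - sg s * dl k z)"
  proof (intro ballI ext)
    fix k z assume k: "k \<in> K" and all: "\<forall>k\<in>K. G (f k) = G (f k0)"
    have "G (f k) z = G (f k0) z" using all k by simp
    then have "H (f k) z + sg s * dl k z = G (f k0) z" unfolding G_def using gi[OF k] by simp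
    then show "H (f k) z = G (f k0) z - sg s * dl k z" by simp
  qed
  then show ?thesis by blast
qed

end


lemma linked_sym: "(K,K') \<in> linked_rel X \<Longrightarrow> (K',K) \<in> linked_rel X"
  unfolding linked_rel_def by blast

lemma linked_mc: "(K,K') \<in> linked_rel X \<Longrightarrow> K \<in> max_chains X \<and> K' \<in> max_chains X"
  unfolding linked_rel_def by blast

lemma linked_trancl_mc: "(K,K') \<in> (linked_rel X)\<^sup>+ \<Longrightarrow> K \<in> max_chains X \<and> K' \<in> max_chains X"
  by (induction rule: trancl_induct) (auto dest: linked_mc)

lemma sim_equiv: "equiv (max_chains X) (sim_rel X)"
proof (rule equivI)
  show "refl_on (max_chains X) (sim_rel X)"
    unfolding refl_on_def sim_rel_def using linked_trancl_mc by blast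
  show "sym (sim_rel X)"
  proof (rule symI)
    fix a b assume "(a,b) \<in> sim_rel X"
    then have "(a,b) \<in> Id_on (max_chains X) \<or> (a,b) \<in> (linked_rel X)\<^sup>+" unfolding sim_rel_def by blast
    then show "(b,a) \<in> sim_rel X"
    proof
      assume "(a,b) \<in> (linked_rel X)\<^sup>+"
      then have "(b,a) \<in> (linked_rel X)\<^sup>+"
        using sym_trancl[of "linked_rel X"] linked_sym unfolding sym_def by blast
      then show ?thesis unfolding sim_rel_def by blast
    qed (auto simp: sim_rel_def)
  qed
  show "sim_rel X \<subseteq> max_chains X \<times> max_chains X"
    unfolding sim_rel_def using linked_trancl_mc by auto
  show "trans (sim_rel X)"
  proof (rule transI)
    fix a b c assume "(a,b) \<in> sim_rel X" "(b,c) \<in> sim_rel X"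
    then show "(a,c) \<in> sim_rel X" unfolding sim_rel_def by (auto intro: trancl_trans)
  qed
qed

definition supp2 :: "'a set set \<Rightarrow> 'a set" where "supp2 C = \<Union>C"

context thctx
begin

lemma linked_iff:
  assumes K: "K \<in> max_chains X" "K' \<in> max_chains X"
  shows "(Th X \<theta> K, Th X \<theta> K') \<in> linked_rel X \<longleftrightarrow> (K, K') \<in> linked_rel X"
proof -
  obtain s f where g: "goodg X \<theta> s K (Th X \<theta> K) f" using Th_good K by blast
  obtain s' f' where g': "goodg X \<theta> s' K' (Th X \<theta> K') f'" using Th_good K by blast
  show ?thesis
  proof
    assume "(Th X \<theta> K, Th X \<theta> K') \<in> linked_rel X"
    then show "(K, K') \<in> linked_rel X"
      using p.linked_pres[OF Th_mc[OF K(1)] Th_mc[OF K(2)] psi_good[OF K(1) g] psi_good[OF K(2) g']] by blast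
  next
    assume "(K, K') \<in> linked_rel X"
    then show "(Th X \<theta> K, Th X \<theta> K') \<in> linked_rel X"
      using m.linked_pres[OF K g g'] by blast
  qed
qed

lemma trancl_fwd:
  assumes "(K,K') \<in> (linked_rel X)\<^sup>+"
  shows "(Th X \<theta> K, Th X \<theta> K') \<in> (linked_rel X)\<^sup>+"
  using assms
proof (induction rule: trancl_induct)
  case (base y)
  then show ?case using linked_iff linked_mc by blast
next
  case (step y z)
  then have "(Th X \<theta> y, Th X \<theta> z) \<in> linked_rel X" using linked_iff linked_mc by blast
  then show ?case using step by (meson trancl.trancl_into_trancl)
qed

lemma trancl_bwd:
  assumes "(D,D') \<in> (linked_rel X)\<^sup>+"
  shows "\<forall>K\<in>max_chains X. D = Th X \<theta> K \<longrightarrow> (\<exists>K'. D' = Th X \<theta> K' \<and> (K,K') \<in> (linked_rel X)\<^sup>+)"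
  using assms
proof (induction rule: trancl_induct)
  case (base y)
  show ?case
  proof (intro ballI impI)
    fix K assume K: "K \<in> max_chains X" "D = Th X \<theta> K"
    have "y \<in> max_chains X" using base linked_mc by blast
    then obtain K' where K': "K' \<in> max_chains X" "y = Th X \<theta> K'" using Th_surj by blast
    then have "(K,K') \<in> linked_rel X" using linked_iff[OF K(1) K'(1)] base K by simp
    then show "\<exists>K'. y = Th X \<theta> K' \<and> (K,K') \<in> (linked_rel X)\<^sup>+" using K' by blast
  qed
next
  case (step y z)
  show ?case
  proof (intro ballI impI)
    fix K assume K: "K \<in> max_chains X" "D = Th X \<theta> K"
    obtain K1 where K1: "y = Th X \<theta> K1" "(K,K1) \<in> (linked_rel X)\<^sup>+" using step K by blast
    have K1m: "K1 \<in> max_chains X" using K1 linked_trancl_mc by blast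
    have "z \<in> max_chains X" using step linked_mc by blast
    then obtain K2 where K2: "K2 \<in> max_chains X" "z = Th X \<theta> K2" using Th_surj by blast
    then have "(K1,K2) \<in> linked_rel X" using linked_iff[OF K1m K2(1)] step K1 by simp
    then have "(K,K2) \<in> (linked_rel X)\<^sup>+" using K1(2) by (simp add: trancl.trancl_into_trancl)
    then show "\<exists>K'. z = Th X \<theta> K' \<and> (K,K') \<in> (linked_rel X)\<^sup>+" using K2 by blast
  qed
qed

lemma class_img:
  assumes K: "K \<in> max_chains X"
  shows "Th X \<theta> ` (sim_rel X `` {K}) = sim_rel X `` {Th X \<theta> K}"
proof
  show "Th X \<theta> ` (sim_rel X `` {K}) \<subseteq> sim_rel X `` {Th X \<theta> K}"
  proof
    fix D assume "D \<in> Th X \<theta> ` (sim_rel X `` {K})"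
    then obtain K' where K': "(K,K') \<in> sim_rel X" "D = Th X \<theta> K'" by blast
    then have "K' = K \<or> (K,K') \<in> (linked_rel X)\<^sup>+" unfolding sim_rel_def by blast
    then show "D \<in> sim_rel X `` {Th X \<theta> K}"
    proof
      assume "K' = K" then show ?thesis using K' K Th_mc unfolding sim_rel_def by auto
    next
      assume "(K,K') \<in> (linked_rel X)\<^sup>+"
      then show ?thesis using trancl_fwd K' unfolding sim_rel_def by blast
    qed
  qed
  show "sim_rel X `` {Th X \<theta> K} \<subseteq> Th X \<theta> ` (sim_rel X `` {K})"
  proof
    fix D assume "D \<in> sim_rel X `` {Th X \<theta> K}"
    then have "D = Th X \<theta> K \<or> (Th X \<theta> K, D) \<in> (linked_rel X)\<^sup>+" unfolding sim_rel_def by blast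
    then show "D \<in> Th X \<theta> ` (sim_rel X `` {K})"
    proof
      assume "D = Th X \<theta> K" then show ?thesis using K unfolding sim_rel_def by auto
    next
      assume "(Th X \<theta> K, D) \<in> (linked_rel X)\<^sup>+"
      then obtain K' where "D = Th X \<theta> K'" "(K,K') \<in> (linked_rel X)\<^sup>+" using trancl_bwd K by blast
      then show ?thesis unfolding sim_rel_def by blast
    qed
  qed
qed

lemma rep_step:
  assumes K1: "K1 \<in> max_chains X" and g1: "goodg X \<theta> s K1 (Th X \<theta> K1) f1"
    and h1: "\<forall>k\<in>K1. H (f1 k) = (\<lambda>z. c z - sg s * dl k z)"
    and L: "(K1,K2) \<in> linked_rel X"
  shows "\<exists>f. goodg X \<theta> s K2 (Th X \<theta> K2) f \<and> (\<forall>k\<in>K2. H (f k) = (\<lambda>z. c z - sg s * dl k z))"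
proof -
  have K2: "K2 \<in> max_chains X" using L linked_mc by blast
  obtain s2 f2 where g2: "goodg X \<theta> s2 K2 (Th X \<theta> K2) f2" using Th_good K2 by blast
  obtain x where x: "x \<in> K1" "x \<in> K2" "x \<notin> minimal_elems X" "x \<notin> maximal_elems X"
    using L unfolding linked_rel_def by blast
  have e: "s = s2" "f1 x = f2 x" using m.step1[OF K1 K2 x g1 g2] by auto
  obtain c2 where c2: "\<forall>k\<in>K2. H (f2 k) = (\<lambda>z. c2 z - sg s2 * dl k z)" using chain_rep[OF K2 g2] by blast
  have a1: "H (f2 x) = (\<lambda>z. c2 z - sg s2 * dl x z)" using c2 x(2) by blast
  have a2: "H (f1 x) = (\<lambda>z. c z - sg s * dl x z)" using h1 x(1) by blast
  have eq: "(\<lambda>z. c2 z - sg s * dl x z) = (\<lambda>z. c z - sg s * dl x z)"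
    using a1 a2 e by simp
  have "c2 = c"
  proof
    fix z show "c2 z = c z" using fun_cong[OF eq, of z] by simp
  qed
  then show ?thesis using g2 c2 e by blast
qed

lemma class_rep:
  assumes C: "C \<in> max_chains X" and gC: "goodg X \<theta> s C (Th X \<theta> C) fC"
  shows "\<exists>c. \<forall>K\<in>sim_rel X `` {C}. \<exists>f. goodg X \<theta> s K (Th X \<theta> K) f \<and> (\<forall>k\<in>K. H (f k) = (\<lambda>z. c z - sg s * dl k z))"
proof -
  obtain c where c: "\<forall>k\<in>C. H (fC k) = (\<lambda>z. c z - sg s * dl k z)" using chain_rep[OF C gC] by blast
  let ?P = "\<lambda>K. \<exists>f. goodg X \<theta> s K (Th X \<theta> K) f \<and> (\<forall>k\<in>K. H (f k) = (\<lambda>z. c z - sg s * dl k z))"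
  have PC: "?P C" using gC c by blast
  have tr: "\<And>K. (C,K) \<in> (linked_rel X)\<^sup>+ \<Longrightarrow> ?P K"
  proof -
    fix K assume "(C,K) \<in> (linked_rel X)\<^sup>+"
    then show "?P K"
    proof (induction rule: trancl_induct)
      case (base y) show ?case using rep_step[OF C gC c base] .
    next
      case (step y z)
      then obtain f where "goodg X \<theta> s y (Th X \<theta> y) f" "\<forall>k\<in>y. H (f k) = (\<lambda>z. c z - sg s * dl k z)" by blast
      moreover have "y \<in> max_chains X" using step linked_mc by blast
      ultimately show ?case using rep_step step(2) by blast
    qed
  qed
  have "\<forall>K\<in>sim_rel X `` {C}. ?P K"
  proof
    fix K assume "K \<in> sim_rel X `` {C}"
    then have "K = C \<or> (C,K) \<in> (linked_rel X)\<^sup>+" unfolding sim_rel_def by blast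
    then show "?P K" using PC tr by blast
  qed
  then show ?thesis by blast
qed

end


lemma dl_inj:
  assumes "(\<lambda>z. c z - sg s * dl k z) = (\<lambda>z. c z - sg s * dl k' z)"
  shows "k = k'"
proof (rule ccontr)
  assume ne: "k \<noteq> k'"
  have "c k - sg s * dl k k = c k - sg s * dl k' k" using fun_cong[OF assms, of k] .
  then show False using ne unfolding dl_def sg_def by (cases s) auto
qed

lemma sum_bij_le_eq:
  fixes g :: "'b \<Rightarrow> int"
  assumes fin: "finite Q" and F: "bij_betw F Q Q" and le: "\<forall>x\<in>Q. g x \<le> g (F x)"
  shows "\<forall>x\<in>Q. g x = g (F x)"
proof (rule ccontr)
  assume "\<not> (\<forall>x\<in>Q. g x = g (F x))"
  then obtain x where x: "x \<in> Q" "g x \<noteq> g (F x)" by blast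
  have "g x \<le> g (F x)" using le x(1) by blast
  then have "g x < g (F x)" using x(2) by simp
  then have ex: "\<exists>a\<in>Q. g a < g (F a)" using x(1) by blast
  have "sum g Q < sum (\<lambda>x. g (F x)) Q" by (rule sum_strict_mono_ex1[OF fin le ex])
  moreover have "sum (\<lambda>x. g (F x)) Q = sum g Q" using sum.reindex_bij_betw[OF F] .
  ultimately show False by simp
qed

context thctx
begin

lemma H_pair:
  assumes uv: "u \<in> X" "v \<in> X" "u < v"
  shows "\<exists>p q. (p,q) \<in> basis X \<and> \<theta> (p,q) = (u,v) \<and> H v = (\<lambda>z. H u z + dl p z - dl q z)"
proof -
  have "is_chain {u,v}" using uv unfolding is_chain_def by (auto simp: less_imp_le)
  then obtain E where E: "E \<in> max_chains X" "{u,v} \<subseteq> E" using chain_ext[OF fin, of "{u,v}"] uv by auto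
  then obtain K where K: "K \<in> max_chains X" "E = Th X \<theta> K" using Th_surj by blast
  then obtain s f where g: "goodg X \<theta> s K E f" using Th_good by blast
  obtain c where c: "\<forall>k\<in>K. H (f k) = (\<lambda>z. c z - sg s * dl k z)" using chain_rep[OF K(1) g] by blast
  have th: "\<And>a b. a \<in> K \<Longrightarrow> b \<in> K \<Longrightarrow> a < b \<Longrightarrow> \<theta> (a,b) = (if s then (f a, f b) else (f b, f a))"
    using g unfolding goodg_def by blast
  have fK: "f ` K = E" using g unfolding goodg_def bij_betw_def by auto
  have KX: "K \<subseteq> X" using K maxch_sub by blast
  obtain a where a: "a \<in> K" "u = f a" using fK E by blast
  obtain b where b: "b \<in> K" "v = f b" using fK E by blast
  have "a \<noteq> b" using uv a b by auto
  then have "a < b \<or> b < a" using maxch_chain[OF K(1)] a b unfolding is_chain_def by (auto simp: order.order_iff_strict)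
  then show ?thesis
  proof
    assume ab: "a < b"
    have o: "fst (\<theta> (a,b)) < snd (\<theta> (a,b))" using m.psi_basis ab a b KX by blast
    have bas: "(a,b) \<in> basis X" using a b ab KX unfolding basis_def by auto
    show ?thesis
    proof (cases s)
      case True
      then have t: "\<theta> (a,b) = (u,v)" using th[OF a(1) b(1) ab] a b by auto
      have "H v = (\<lambda>z. H u z + dl a z - dl b z)" using c a b True by (auto simp: sg_def)
      then show ?thesis using bas t by blast
    next
      case False
      then have "\<theta> (a,b) = (v,u)" using th[OF a(1) b(1) ab] a b by auto
      then show ?thesis using o uv by auto
    qed
  next
    assume ab: "b < a"
    have o: "fst (\<theta> (b,a)) < snd (\<theta> (b,a))" using m.psi_basis ab a b KX by blast
    have bas: "(b,a) \<in> basis X" using a b ab KX unfolding basis_def by auto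
    show ?thesis
    proof (cases s)
      case True
      then have "\<theta> (b,a) = (v,u)" using th[OF b(1) a(1) ab] a b by auto
      then show ?thesis using o uv by auto
    next
      case False
      then have t: "\<theta> (b,a) = (u,v)" using th[OF b(1) a(1) ab] a b by auto
      have "H v = (\<lambda>z. H u z + dl b z - dl a z)" using c a b False by (auto simp: sg_def)
      then show ?thesis using bas t by blast
    qed
  qed
qed

lemma class_struct:
  assumes C: "C \<in> max_chains X" and gC: "goodg X \<theta> s C (Th X \<theta> C) fC"
  shows "\<exists>\<mu>. \<mu> ` supp (Th X \<theta> ` (sim_rel X `` {C})) = supp (sim_rel X `` {C}) \<and>
     (\<forall>u\<in>supp (Th X \<theta> ` (sim_rel X `` {C})). \<forall>v\<in>supp (Th X \<theta> ` (sim_rel X `` {C})). u < v \<longrightarrow>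
        (if s then \<mu> u < \<mu> v \<and> \<theta> (\<mu> u, \<mu> v) = (u,v) else \<mu> v < \<mu> u \<and> \<theta> (\<mu> v, \<mu> u) = (u,v)))"
proof -
  let ?c = "sim_rel X `` {C}"
  let ?A = "supp (Th X \<theta> ` ?c)"
  let ?B = "supp ?c"
  obtain c where c: "\<forall>K\<in>?c. \<exists>f. goodg X \<theta> s K (Th X \<theta> K) f \<and> (\<forall>k\<in>K. H (f k) = (\<lambda>z. c z - sg s * dl k z))"
    using class_rep[OF C gC] by blast
  define \<mu> where "\<mu> d = (SOME k. k \<in> X \<and> H d = (\<lambda>z. c z - sg s * dl k z))" for d
  have cmc: "?c \<subseteq> max_chains X" using sim_equiv unfolding equiv_def refl_on_def by blast
  have mu_eq: "\<And>d k. k \<in> X \<Longrightarrow> H d = (\<lambda>z. c z - sg s * dl k z) \<Longrightarrow> \<mu> d = k"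
  proof -
    fix d k assume k: "k \<in> X" "H d = (\<lambda>z. c z - sg s * dl k z)"
    have "\<mu> d \<in> X \<and> H d = (\<lambda>z. c z - sg s * dl (\<mu> d) z)"
      unfolding \<mu>_def by (rule someI[of _ k]) (use k in blast)
    then have "(\<lambda>z. c z - sg s * dl (\<mu> d) z) = (\<lambda>z. c z - sg s * dl k z)" using k(2) by simp
    then show "\<mu> d = k" by (rule dl_inj)
  qed
  have inA: "\<And>d. d \<in> ?A \<Longrightarrow> \<mu> d \<in> ?B \<and> H d = (\<lambda>z. c z - sg s * dl (\<mu> d) z)"
  proof -
    fix d assume "d \<in> ?A"
    then obtain K where K: "K \<in> ?c" "d \<in> Th X \<theta> K" unfolding supp_def by blast
    obtain f where f: "goodg X \<theta> s K (Th X \<theta> K) f" "\<forall>k\<in>K. H (f k) = (\<lambda>z. c z - sg s * dl k z)"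
      using c K by blast
    have "f ` K = Th X \<theta> K" using f unfolding goodg_def bij_betw_def by auto
    then obtain k where k: "k \<in> K" "d = f k" using K by blast
    have kX: "k \<in> X" using k K cmc maxch_sub by blast
    have "\<mu> d = k" using mu_eq[OF kX] f k by blast
    moreover have "k \<in> ?B" using k K unfolding supp_def by blast
    moreover have "H d = (\<lambda>z. c z - sg s * dl k z)" using f(2) k by blast
    ultimately show "\<mu> d \<in> ?B \<and> H d = (\<lambda>z. c z - sg s * dl (\<mu> d) z)" by simp
  qed
  have img: "\<mu> ` ?A = ?B"
  proof
    show "\<mu> ` ?A \<subseteq> ?B" using inA by blast
    show "?B \<subseteq> \<mu> ` ?A"
    proof
      fix k assume "k \<in> ?B"
      then obtain K where K: "K \<in> ?c" "k \<in> K" unfolding supp_def by blast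
      obtain f where f: "goodg X \<theta> s K (Th X \<theta> K) f" "\<forall>k\<in>K. H (f k) = (\<lambda>z. c z - sg s * dl k z)"
        using c K by blast
      have "f ` K = Th X \<theta> K" using f unfolding goodg_def bij_betw_def by auto
      then have fk: "f k \<in> ?A" using K unfolding supp_def by blast
      have kX: "k \<in> X" using K cmc maxch_sub by blast
      have "\<mu> (f k) = k" using mu_eq[OF kX] f K by blast
      then show "k \<in> \<mu> ` ?A" using fk by force
    qed
  qed
  have AX: "?A \<subseteq> X"
  proof
    fix d assume "d \<in> ?A"
    then obtain K where K: "K \<in> ?c" "d \<in> Th X \<theta> K" unfolding supp_def by blast
    then show "d \<in> X" using Th_mc cmc maxch_sub by blast
  qed
  have pairs: "\<forall>u\<in>?A. \<forall>v\<in>?A. u < v \<longrightarrow>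
        (if s then \<mu> u < \<mu> v \<and> \<theta> (\<mu> u, \<mu> v) = (u,v) else \<mu> v < \<mu> u \<and> \<theta> (\<mu> v, \<mu> u) = (u,v))"
  proof (intro ballI impI)
    fix u v assume uv: "u \<in> ?A" "v \<in> ?A" "u < v"
    obtain p q where pq: "(p,q) \<in> basis X" "\<theta> (p,q) = (u,v)" "H v = (\<lambda>z. H u z + dl p z - dl q z)"
      using H_pair[of u v] uv AX by blast
    have pq2: "p < q" using pq unfolding basis_def by auto
    have Hu: "H u = (\<lambda>z. c z - sg s * dl (\<mu> u) z)" using inA uv by blast
    have Hv: "H v = (\<lambda>z. c z - sg s * dl (\<mu> v) z)" using inA uv by blast
    have eq: "\<And>z. dl p z - dl q z = sg s * (dl (\<mu> u) z - dl (\<mu> v) z)"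
    proof -
      fix z
      have "H v z = H u z + dl p z - dl q z" using pq(3) by simp
      then show "dl p z - dl q z = sg s * (dl (\<mu> u) z - dl (\<mu> v) z)" using Hu Hv by (simp add: algebra_simps)
    qed
    have pne: "p \<noteq> q" using pq2 by simp
    show "if s then \<mu> u < \<mu> v \<and> \<theta> (\<mu> u, \<mu> v) = (u,v) else \<mu> v < \<mu> u \<and> \<theta> (\<mu> v, \<mu> u) = (u,v)"
    proof (cases s)
      case True
      have e1: "dl p p - dl q p = sg s * (dl (\<mu> u) p - dl (\<mu> v) p)" by (rule eq)
      have e2: "dl p q - dl q q = sg s * (dl (\<mu> u) q - dl (\<mu> v) q)" by (rule eq)
      have "p = \<mu> u" using e1 pne True unfolding dl_def sg_def by (cases "p = \<mu> u"; cases "p = \<mu> v"; cases "q = \<mu> u"; cases "q = \<mu> v") auto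
      moreover have "q = \<mu> v" using e2 pne True unfolding dl_def sg_def by (cases "p = \<mu> u"; cases "p = \<mu> v"; cases "q = \<mu> u"; cases "q = \<mu> v") auto
      ultimately show ?thesis using True pq pq2 by simp
    next
      case False
      have e1: "dl p p - dl q p = sg s * (dl (\<mu> u) p - dl (\<mu> v) p)" by (rule eq)
      have e2: "dl p q - dl q q = sg s * (dl (\<mu> u) q - dl (\<mu> v) q)" by (rule eq)
      have "p = \<mu> v" using e1 pne False unfolding dl_def sg_def by (cases "p = \<mu> u"; cases "p = \<mu> v"; cases "q = \<mu> u"; cases "q = \<mu> v") auto
      moreover have "q = \<mu> u" using e2 pne False unfolding dl_def sg_def by (cases "p = \<mu> u"; cases "p = \<mu> v"; cases "q = \<mu> u"; cases "q = \<mu> v") auto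
      ultimately show ?thesis using False pq pq2 by simp
    qed
  qed
  show ?thesis using img pairs by blast
qed

end


context thctx
begin

lemma sim_sub: "sim_rel X \<subseteq> max_chains X \<times> max_chains X"
  unfolding sim_rel_def using linked_trancl_mc by auto

lemma class_sub: "sim_rel X `` {C} \<subseteq> max_chains X"
  using sim_sub by blast

definition Q where "Q = max_chains X // sim_rel X"

lemma Q_fin: "finite Q"
proof -
  have "Q \<subseteq> Pow (max_chains X)" unfolding Q_def quotient_def using class_sub by blast
  then show ?thesis using mc_fin by (simp add: finite_subset)
qed

lemma Q_cls: "\<CC> \<in> Q \<Longrightarrow> \<exists>C\<in>max_chains X. \<CC> = sim_rel X `` {C}"
  unfolding Q_def by (erule quotientE) blast

lemma F_bij: "bij_betw (\<lambda>\<CC>. Th X \<theta> ` \<CC>) Q Q"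
proof -
  have into: "(\<lambda>\<CC>. Th X \<theta> ` \<CC>) ` Q \<subseteq> Q"
  proof
    fix D assume "D \<in> (\<lambda>\<CC>. Th X \<theta> ` \<CC>) ` Q"
    then obtain \<CC> where c: "\<CC> \<in> Q" "D = Th X \<theta> ` \<CC>" by blast
    then obtain C where C: "C \<in> max_chains X" "\<CC> = sim_rel X `` {C}" using Q_cls by blast
    then have "D = sim_rel X `` {Th X \<theta> C}" using class_img c by simp
    then show "D \<in> Q" unfolding Q_def using Th_mc[OF C(1)] by (simp add: quotientI)
  qed
  have sub: "\<And>\<CC>. \<CC> \<in> Q \<Longrightarrow> \<CC> \<subseteq> max_chains X"
    using Q_cls class_sub by blast
  have inj: "inj_on (\<lambda>\<CC>. Th X \<theta> ` \<CC>) Q"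
  proof (rule inj_onI)
    fix c1 c2 assume c: "c1 \<in> Q" "c2 \<in> Q" "Th X \<theta> ` c1 = Th X \<theta> ` c2"
    then show "c1 = c2" using inj_on_image_eq_iff[OF Th_inj sub[OF c(1)] sub[OF c(2)]] by blast
  qed
  have "(\<lambda>\<CC>. Th X \<theta> ` \<CC>) ` Q = Q" using endo_inj_surj[OF Q_fin into inj] .
  then show ?thesis using inj unfolding bij_betw_def by blast
qed

lemma start_good:
  assumes C: "C \<in> max_chains X" and ci: "chain_image X \<theta> C D"
  shows "\<exists>s f. goodg X \<theta> s C (Th X \<theta> C) f \<and> D = Th X \<theta> C"
proof -
  obtain s f where "goodg X \<theta> s C D f"
    using ci incr_good decr_good unfolding chain_image_def by blast
  then show ?thesis using good_D[OF C] by blast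
qed

lemma class_ineq:
  assumes c: "\<CC> \<in> Q"
  shows "card (supp \<CC>) \<le> card (supp (Th X \<theta> ` \<CC>)) \<and> card (prs (supp (Th X \<theta> ` \<CC>))) \<le> card (prs (supp \<CC>))"
proof -
  obtain C where C: "C \<in> max_chains X" "\<CC> = sim_rel X `` {C}" using Q_cls c by blast
  obtain s f where g: "goodg X \<theta> s C (Th X \<theta> C) f" using Th_good C by blast
  let ?A = "supp (Th X \<theta> ` \<CC>)"
  let ?B = "supp \<CC>"
  obtain \<mu> where mu: "\<mu> ` ?A = ?B"
    "\<forall>u\<in>?A. \<forall>v\<in>?A. u < v \<longrightarrow> (if s then \<mu> u < \<mu> v \<and> \<theta> (\<mu> u, \<mu> v) = (u,v) else \<mu> v < \<mu> u \<and> \<theta> (\<mu> v, \<mu> u) = (u,v))"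
    using class_struct[OF C(1) g] C(2) by blast
  have cmc: "\<CC> \<subseteq> max_chains X" using C sim_equiv unfolding equiv_def refl_on_def by blast
  have AX: "?A \<subseteq> X" unfolding supp_def using cmc Th_mc maxch_sub by blast
  have BX: "?B \<subseteq> X" unfolding supp_def using cmc maxch_sub by blast
  have finA: "finite ?A" using AX fin finite_subset by blast
  have finB: "finite ?B" using BX fin finite_subset by blast
  have c1: "card ?B \<le> card ?A" using card_image_le[OF finA, of \<mu>] mu(1) by simp
  define \<pi> where "\<pi> = (\<lambda>(u,v). if s then (\<mu> u, \<mu> v) else (\<mu> v, \<mu> u))"
  have thpi: "\<And>e. e \<in> prs ?A \<Longrightarrow> \<theta> (\<pi> e) = e \<and> \<pi> e \<in> prs ?B"
  proof -
    fix e assume "e \<in> prs ?A"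
    then obtain u v where uv: "e = (u,v)" "u \<in> ?A" "v \<in> ?A" "u < v" unfolding prs_def by blast
    have mB: "\<mu> u \<in> ?B" "\<mu> v \<in> ?B" using mu(1) uv by blast+
    show "\<theta> (\<pi> e) = e \<and> \<pi> e \<in> prs ?B"
    proof (cases s)
      case True
      then show ?thesis using mu(2) uv mB unfolding \<pi>_def prs_def by auto
    next
      case False
      then show ?thesis using mu(2) uv mB unfolding \<pi>_def prs_def by auto
    qed
  qed
  have "inj_on \<pi> (prs ?A)"
  proof (rule inj_onI)
    fix e1 e2 assume "e1 \<in> prs ?A" "e2 \<in> prs ?A" "\<pi> e1 = \<pi> e2"
    then show "e1 = e2" using thpi by metis
  qed
  moreover have "\<pi> ` prs ?A \<subseteq> prs ?B" using thpi by blast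
  moreover have "finite (prs ?B)"
  proof -
    have "prs ?B \<subseteq> ?B \<times> ?B" unfolding prs_def by blast
    then show ?thesis using finB by (simp add: finite_subset)
  qed
  ultimately have c2: "card (prs ?A) \<le> card (prs ?B)" by (rule card_inj_on_le)
  show ?thesis using c1 c2 by blast
qed

lemma class_eq:
  assumes c: "\<CC> \<in> Q"
  shows "card (supp \<CC>) = card (supp (Th X \<theta> ` \<CC>)) \<and> card (prs (supp (Th X \<theta> ` \<CC>))) = card (prs (supp \<CC>))"
proof -
  have e1: "\<forall>x\<in>Q. int (card (supp x)) = int (card (supp (Th X \<theta> ` x)))"
    using sum_bij_le_eq[OF Q_fin F_bij, of "\<lambda>x. int (card (supp x))"] class_ineq by simp
  have e2: "\<forall>x\<in>Q. - int (card (prs (supp x))) = - int (card (prs (supp (Th X \<theta> ` x))))"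
    using sum_bij_le_eq[OF Q_fin F_bij, of "\<lambda>x. - int (card (prs (supp x)))"] class_ineq by simp
  show ?thesis using e1 e2 c by simp
qed

end


context thctx
begin

lemma main:
  assumes c: "\<CC> \<in> max_chains X // sim_rel X" and CC: "C \<in> \<CC>" and ci: "chain_image X \<theta> C D"
  shows "\<exists>lam. bij_betw lam (supp \<CC>) (supp (sim_rel X `` {D})) \<and>
     (((\<forall>x\<in>supp \<CC>. \<forall>y\<in>supp \<CC>. x \<le> y \<longleftrightarrow> lam x \<le> lam y) \<and>
       (\<forall>x\<in>supp \<CC>. \<forall>y\<in>supp \<CC>. x < y \<longrightarrow> \<theta> (x, y) = (lam x, lam y)))
     \<or>
      ((\<forall>x\<in>supp \<CC>. \<forall>y\<in>supp \<CC>. x \<le> y \<longleftrightarrow> lam y \<le> lam x) \<and>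
       (\<forall>x\<in>supp \<CC>. \<forall>y\<in>supp \<CC>. x < y \<longrightarrow> \<theta> (x, y) = (lam y, lam x))))"
proof -
  have cQ: "\<CC> \<in> Q" using c unfolding Q_def .
  obtain C0 where C0: "C0 \<in> max_chains X" "\<CC> = sim_rel X `` {C0}" using Q_cls cQ by blast
  have Cm: "C \<in> max_chains X" using CC C0 class_sub by blast
  have "(C0, C) \<in> sim_rel X" using CC C0 by blast
  then have cC: "\<CC> = sim_rel X `` {C}" using C0(2) equiv_class_eq[OF sim_equiv] by simp
  obtain s f where g: "goodg X \<theta> s C (Th X \<theta> C) f" and DC: "D = Th X \<theta> C"
    using start_good[OF Cm ci] by blast
  have Dimg: "sim_rel X `` {D} = Th X \<theta> ` \<CC>" using class_img[OF Cm] DC cC by simp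
  let ?A = "supp (Th X \<theta> ` \<CC>)"
  let ?B = "supp \<CC>"
  obtain \<mu> where mu: "\<mu> ` ?A = ?B"
    "\<forall>u\<in>?A. \<forall>v\<in>?A. u < v \<longrightarrow> (if s then \<mu> u < \<mu> v \<and> \<theta> (\<mu> u, \<mu> v) = (u,v) else \<mu> v < \<mu> u \<and> \<theta> (\<mu> v, \<mu> u) = (u,v))"
    using class_struct[OF Cm g] cC by blast
  have ce: "card ?B = card ?A" "card (prs ?A) = card (prs ?B)" using class_eq[OF cQ] by auto
  have cmc: "\<CC> \<subseteq> max_chains X" using cC class_sub by blast
  have AX: "?A \<subseteq> X" unfolding supp_def using cmc Th_mc maxch_sub by blast
  have BX: "?B \<subseteq> X" unfolding supp_def using cmc maxch_sub by blast
  have finA: "finite ?A" using AX fin finite_subset by blast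
  have finB: "finite ?B" using BX fin finite_subset by blast
  have "card (\<mu> ` ?A) = card ?A" using mu(1) ce(1) by simp
  then have injmu: "inj_on \<mu> ?A" using eq_card_imp_inj_on[OF finA] by blast
  define \<pi> where "\<pi> = (\<lambda>(u,v). if s then (\<mu> u, \<mu> v) else (\<mu> v, \<mu> u))"
  have thpi: "\<And>e. e \<in> prs ?A \<Longrightarrow> \<theta> (\<pi> e) = e \<and> \<pi> e \<in> prs ?B"
  proof -
    fix e assume "e \<in> prs ?A"
    then obtain u v where uv: "e = (u,v)" "u \<in> ?A" "v \<in> ?A" "u < v" unfolding prs_def by blast
    have mB: "\<mu> u \<in> ?B" "\<mu> v \<in> ?B" using mu(1) uv by blast+
    show "\<theta> (\<pi> e) = e \<and> \<pi> e \<in> prs ?B"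
    proof (cases s)
      case True
      then show ?thesis using mu(2) uv mB unfolding \<pi>_def prs_def by auto
    next
      case False
      then show ?thesis using mu(2) uv mB unfolding \<pi>_def prs_def by auto
    qed
  qed
  have injpi: "inj_on \<pi> (prs ?A)"
  proof (rule inj_onI)
    fix e1 e2 assume "e1 \<in> prs ?A" "e2 \<in> prs ?A" "\<pi> e1 = \<pi> e2"
    then show "e1 = e2" using thpi by metis
  qed
  have finPB: "finite (prs ?B)"
  proof -
    have "prs ?B \<subseteq> ?B \<times> ?B" unfolding prs_def by blast
    then show ?thesis using finB by (simp add: finite_subset)
  qed
  have pisurj: "\<pi> ` prs ?A = prs ?B"
  proof (rule card_subset_eq[OF finPB])
    show "\<pi> ` prs ?A \<subseteq> prs ?B" using thpi by blast
    show "card (\<pi> ` prs ?A) = card (prs ?B)" using card_image[OF injpi] ce(2) by simp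
  qed
  define lam where "lam = inv_into ?A \<mu>"
  have bmu: "bij_betw \<mu> ?A ?B" using injmu mu(1) unfolding bij_betw_def by blast
  have blam: "bij_betw lam ?B ?A" unfolding lam_def using bij_betw_inv_into[OF bmu] .
  have lamA: "\<And>x. x \<in> ?B \<Longrightarrow> lam x \<in> ?A" using blam unfolding bij_betw_def by blast
  have mulam: "\<And>x. x \<in> ?B \<Longrightarrow> \<mu> (lam x) = x" unfolding lam_def using mu(1) by (simp add: f_inv_into_f)
  have lammu: "\<And>u. u \<in> ?A \<Longrightarrow> lam (\<mu> u) = u" unfolding lam_def using injmu by (simp add: inv_into_f_f)
  have injlam: "inj_on lam ?B" using blam unfolding bij_betw_def by blast
  have pB: "\<And>x y. x \<in> ?B \<Longrightarrow> y \<in> ?B \<Longrightarrow> x < y \<Longrightarrow> \<exists>u v. u \<in> ?A \<and> v \<in> ?A \<and> u < v \<and> (x,y) = \<pi> (u,v)"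
  proof -
    fix x y assume "x \<in> ?B" "y \<in> ?B" "x < y"
    then have "(x,y) \<in> prs ?B" unfolding prs_def by blast
    then obtain e where "e \<in> prs ?A" "(x,y) = \<pi> e" using pisurj by blast
    then show "\<exists>u v. u \<in> ?A \<and> v \<in> ?A \<and> u < v \<and> (x,y) = \<pi> (u,v)" unfolding prs_def by blast
  qed
  show ?thesis
  proof (cases s)
    case True
    have th: "\<forall>x\<in>?B. \<forall>y\<in>?B. x < y \<longrightarrow> \<theta> (x, y) = (lam x, lam y) \<and> lam x < lam y"
    proof (intro ballI impI)
      fix x y assume xy: "x \<in> ?B" "y \<in> ?B" "x < y"
      then obtain u v where uv: "u \<in> ?A" "v \<in> ?A" "u < v" "(x,y) = \<pi> (u,v)" using pB by blast
      then have "x = \<mu> u" "y = \<mu> v" using True unfolding \<pi>_def by auto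
      moreover have "\<theta> (\<mu> u, \<mu> v) = (u,v)" using mu(2) uv True by auto
      ultimately show "\<theta> (x, y) = (lam x, lam y) \<and> lam x < lam y" using lammu uv by simp
    qed
    have ord: "\<forall>x\<in>?B. \<forall>y\<in>?B. x \<le> y \<longleftrightarrow> lam x \<le> lam y"
    proof (intro ballI iffI)
      fix x y assume xy: "x \<in> ?B" "y \<in> ?B" "x \<le> y"
      show "lam x \<le> lam y"
      proof (cases "x = y")
        case True then show ?thesis by simp
      next
        case False then have "x < y" using xy by simp
        then show ?thesis using th xy by (simp add: less_imp_le)
      qed
    next
      fix x y assume xy: "x \<in> ?B" "y \<in> ?B" "lam x \<le> lam y"
      show "x \<le> y"
      proof (cases "lam x = lam y")
        case True then have "x = y" using injlam xy unfolding inj_on_def by blast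
        then show ?thesis by simp
      next
        case False then have l: "lam x < lam y" using xy by simp
        have "\<mu> (lam x) < \<mu> (lam y)" using mu(2) lamA[OF xy(1)] lamA[OF xy(2)] l True by auto
        then show ?thesis using mulam xy by (simp add: less_imp_le)
      qed
    qed
    show ?thesis using blam ord th Dimg by auto
  next
    case sF: False
    have th: "\<forall>x\<in>?B. \<forall>y\<in>?B. x < y \<longrightarrow> \<theta> (x, y) = (lam y, lam x) \<and> lam y < lam x"
    proof (intro ballI impI)
      fix x y assume xy: "x \<in> ?B" "y \<in> ?B" "x < y"
      then obtain u v where uv: "u \<in> ?A" "v \<in> ?A" "u < v" "(x,y) = \<pi> (u,v)" using pB by blast
      then have "x = \<mu> v" "y = \<mu> u" using sF unfolding \<pi>_def by auto
      moreover have "\<theta> (\<mu> v, \<mu> u) = (u,v)" using mu(2) uv sF by auto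
      ultimately show "\<theta> (x, y) = (lam y, lam x) \<and> lam y < lam x" using lammu uv by simp
    qed
    have ord: "\<forall>x\<in>?B. \<forall>y\<in>?B. x \<le> y \<longleftrightarrow> lam y \<le> lam x"
    proof (intro ballI iffI)
      fix x y assume xy: "x \<in> ?B" "y \<in> ?B" "x \<le> y"
      show "lam y \<le> lam x"
      proof (cases "x = y")
        case True then show ?thesis by simp
      next
        case False then have "x < y" using xy by simp
        then show ?thesis using th xy by (simp add: less_imp_le)
      qed
    next
      fix x y assume xy: "x \<in> ?B" "y \<in> ?B" "lam y \<le> lam x"
      show "x \<le> y"
      proof (cases "lam x = lam y")
        case True then have "x = y" using injlam xy unfolding inj_on_def by blast
        then show ?thesis by simp
      next
        case False then have l: "lam y < lam x" using xy by simp
        have "if s then \<mu> (lam y) < \<mu> (lam x) \<and> \<theta> (\<mu> (lam y), \<mu> (lam x)) = (lam y, lam x)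
              else \<mu> (lam x) < \<mu> (lam y) \<and> \<theta> (\<mu> (lam x), \<mu> (lam y)) = (lam y, lam x)"
          using mu(2) lamA[OF xy(1)] lamA[OF xy(2)] l by blast
        then have "\<mu> (lam x) < \<mu> (lam y)" using sF by simp
        then show ?thesis using mulam xy by (simp add: less_imp_le)
      qed
    qed
    show ?thesis using blam ord th Dimg by auto
  qed
qed

end

theorem theorem3p10:
  fixes X :: "'a::order set" and \<theta> :: "'a \<times> 'a \<Rightarrow> 'a \<times> 'a"
    and \<CC> :: "'a set set" and C D :: "'a set"
  assumes "finite X" and "connected_poset X"
    and "\<theta> \<in> AM_set X"
    and "\<CC> \<in> max_chains X // sim_rel X"
    and "C \<in> \<CC>" and "chain_image X \<theta> C D"
  shows "\<exists>lam. bij_betw lam (supp \<CC>) (supp (sim_rel X `` {D})) \<and>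
     (((\<forall>x\<in>supp \<CC>. \<forall>y\<in>supp \<CC>. x \<le> y \<longleftrightarrow> lam x \<le> lam y) \<and>
       (\<forall>x\<in>supp \<CC>. \<forall>y\<in>supp \<CC>. x < y \<longrightarrow> \<theta> (x, y) = (lam x, lam y)))
     \<or>
      ((\<forall>x\<in>supp \<CC>. \<forall>y\<in>supp \<CC>. x \<le> y \<longleftrightarrow> lam y \<le> lam x) \<and>
       (\<forall>x\<in>supp \<CC>. \<forall>y\<in>supp \<CC>. x < y \<longrightarrow> \<theta> (x, y) = (lam y, lam x))))"
proof (cases "\<exists>a\<in>X. \<exists>b\<in>X. a \<noteq> b")
  case True
  have "\<theta> \<in> M_set X" "admissible X \<theta>" using assms(3) unfolding AM_set_def by auto
  then interpret thctx X \<theta> using assms(1,2) True by unfold_locales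
  show ?thesis using main[OF assms(4,5,6)] .
next
  case False
  have Xch: "is_chain X" using False unfolding is_chain_def by (metis order.refl)
  have mcX: "\<And>K. K \<in> max_chains X \<Longrightarrow> K = X"
  proof -
    fix K assume K: "K \<in> max_chains X"
    then have "K \<subseteq> X" by (rule maxch_sub)
    moreover have "\<not> K \<subset> X" using K Xch unfolding max_chains_def by blast
    ultimately show "K = X" by blast
  qed
  have sub: "sim_rel X \<subseteq> max_chains X \<times> max_chains X"
    unfolding sim_rel_def using linked_trancl_mc by auto
  obtain C0 where C0: "C0 \<in> max_chains X" "\<CC> = sim_rel X `` {C0}" using assms(4) unfolding quotient_def by blast
  have "\<CC> \<subseteq> {X}" using C0 sub mcX by blast
  then have cX: "\<CC> = {X}" using assms(5) by blast
  have Dm: "D \<in> max_chains X" using assms(6) unfolding chain_image_def incr_to_def decr_to_def by blast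
  then have DX: "D = X" using mcX by blast
  have "(X, X) \<in> sim_rel X" using Dm DX unfolding sim_rel_def by auto
  moreover have "sim_rel X `` {D} \<subseteq> {X}" using sub mcX by blast
  ultimately have sD: "sim_rel X `` {D} = {X}" using DX by blast
  have "supp \<CC> = X" "supp (sim_rel X `` {D}) = X" using cX sD unfolding supp_def by auto
  moreover have "\<forall>x\<in>X. \<forall>y\<in>X. \<not> x < y"
  proof (intro ballI notI)
    fix x y assume "x \<in> X" "y \<in> X" "x < y"
    then have "x = y" using False by blast
    then show False using \<open>x < y\<close> by simp
  qed
  ultimately show ?thesis by (intro exI[of _ id]) (auto simp: bij_betw_def)
qed


end
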